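(* Let $\pi$ be an irreducible $\psi$-generic representation of $\mathrm{SO}_{2l}$ and let $W\in\mathcal W(\pi,\psi)$ with $W(I_{2l})=1$. Then $W_m\in\mathcal W(\pi,\psi)$ for every integer $m\ge1$.
   Context: $F$ is a non-Archimedean local field of characteristic $0$, with maximal ideal $\mathfrak p$, uniformizer $\varpi$, and a nontrivial unramified additive character $\psi$. $J_n$ is the antidiagonal matrix of $1$'s. $\rho\in F^\times$ is a non-square, and $J_{2l,\rho}=\mathrm{diag}(I_{l-1},\begin{pmatrix}0&1\\-\rho&0\end{pmatrix},I_{l-1})J_{2l}$. Then $\mathrm{SO}_{2l}=\{g\in\mathrm{GL}_{2l}(F):\det g=1,{}^tgJ_{2l,\rho}g=J_{2l,\rho}\}$, with upper unipotent subgroup $U$ and generic character $\psi(u)=\psi(\sum_{i=1}^{l-2}u_{i,i+1}+\frac12u_{l-1,l+1})$. $\pi$ is $\psi$-generic if $\mathrm{Hom}_U(\pi,\psi)\ne0$. For a fixed nonzero $\Gamma$ in this space, $\mathcal W(\pi,\psi)=\{g\mapsto\Gamma(\pi(g)v):v\in\pi\}$. Let $K_m=(I_{2l}+\mathrm{Mat}_{2l}(\mathfrak p^m))\cap\mathrm{SO}_{2l}$, $\tau_m(k)=\psi(\varpi^{-2m}(\sum_{i=1}^{l-2}k_{i,i+1}+\frac12k_{l-1,l+1}))$, $e_m=\mathrm{diag}(\varpi^{-2m(l-1)},\dots,\varpi^{-2m},1,1,\varpi^{2m},\dots,\varpi^{2m(l-1)})$, $H_m=e_mK_me_m^{-1}$,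 $\psi_m(h)=\tau_m(e_m^{-1}he_m)$ and $U_m=U\cap H_m$. Then $W_m(g)=\mathrm{Vol}(U_m)^{-1}\int_{U_m}\psi_m^{-1}(u)W(gu)du$. *)

theory Defs
  imports Complex_Main "Jordan_Normal_Form.Determinant"
begin

text \<open>The field F is a type of class field_char_0 equipped with a normalized discrete
valuation v (the value v 0 is irrelevant). in_pow v k x means x lies in p^k.\<close>

definition in_pow :: "('f::field \<Rightarrow> int) \<Rightarrow> int \<Rightarrow> 'f \<Rightarrow> bool" where
  "in_pow v k x \<longleftrightarrow> x = 0 \<or> k \<le> v x"

definition nonarch_local_field :: "('f::field_char_0 \<Rightarrow> int) \<Rightarrow> bool" where
  "nonarch_local_field v \<longleftrightarrow>
     (\<forall>x y. x \<noteq> 0 \<longrightarrow> y \<noteq> 0 \<longrightarrow> v (x * y) = v x + v y) \<and>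
     (\<forall>x y. x \<noteq> 0 \<longrightarrow> y \<noteq> 0 \<longrightarrow> x + y \<noteq> 0 \<longrightarrow> min (v x) (v y) \<le> v (x + y)) \<and>
     (\<exists>x. x \<noteq> 0 \<and> v x = 1) \<and>
     \<comment> \<open>complete with respect to the valuation\<close>
     (\<forall>X :: nat \<Rightarrow> 'f. (\<forall>k. \<exists>N. \<forall>n\<ge>N. \<forall>n'\<ge>N. in_pow v k (X n - X n')) \<longrightarrow>
        (\<exists>L. \<forall>k. \<exists>N. \<forall>n\<ge>N. in_pow v k (X n - L))) \<and>
     \<comment> \<open>finite residue field O/p\<close>
     (\<exists>R. finite R \<and> (\<forall>x. in_pow v 0 x \<longrightarrow> (\<exists>r\<in>R. in_pow v 1 (x - r))))"

definition uniformizer :: "('f::field \<Rightarrow> int) \<Rightarrow> 'f \<Rightarrow> bool" where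
  "uniformizer v w \<longleftrightarrow> w \<noteq> 0 \<and> v w = 1"

text \<open>Nontrivial unramified additive character: trivial on O, nontrivial on p^(-1).\<close>
definition unramified_additive_char :: "('f::field \<Rightarrow> int) \<Rightarrow> ('f \<Rightarrow> complex) \<Rightarrow> bool" where
  "unramified_additive_char v \<psi> \<longleftrightarrow>
     (\<forall>x y. \<psi> (x + y) = \<psi> x * \<psi> y) \<and> (\<forall>x. norm (\<psi> x) = 1) \<and>
     (\<forall>x. in_pow v 0 x \<longrightarrow> \<psi> x = 1) \<and>
     (\<exists>x. in_pow v (-1) x \<and> \<psi> x \<noteq> 1)"

section \<open>The quasi-split group SO_2l (matrices indexed 0..2l-1)\<close>

definition Jmat :: "nat \<Rightarrow> 'f::field mat" where
  "Jmat n = mat n n (\<lambda>(i,j). if i + j = n - 1 then 1 else 0)"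

definition Jrho :: "nat \<Rightarrow> 'f::field \<Rightarrow> 'f mat" where
  "Jrho l \<rho> = mat (2*l) (2*l) (\<lambda>(i,j).
       if i = j \<and> (i < l - 1 \<or> l < i) then 1
       else if i = l - 1 \<and> j = l then 1
       else if i = l \<and> j = l - 1 then - \<rho>
       else 0) * Jmat (2*l)"

definition SO :: "nat \<Rightarrow> 'f::field \<Rightarrow> 'f mat set" where
  "SO l \<rho> = {g \<in> carrier_mat (2*l) (2*l). det g = 1 \<and> transpose_mat g * Jrho l \<rho> * g = Jrho l \<rho>}"

definition Uunip :: "nat \<Rightarrow> 'f::field \<Rightarrow> 'f mat set" where
  "Uunip l \<rho> = {u \<in> SO l \<rho>. \<forall>i<2*l. \<forall>j<2*l. (j < i \<longrightarrow> u $$ (i,j) = 0) \<and> (i = j \<longrightarrow> u $$ (i,j) = 1)}"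

text \<open>Generic character psi(u) = psi(sum_{i=1}^{l-2} u_{i,i+1} + 1/2 u_{l-1,l+1}) (1-based),
written 0-based.\<close>
definition psiU :: "('f::field_char_0 \<Rightarrow> complex) \<Rightarrow> nat \<Rightarrow> 'f mat \<Rightarrow> complex" where
  "psiU \<psi> l u = \<psi> ((\<Sum>i<l-2. u $$ (i, i+1)) + u $$ (l-2, l) / 2)"

definition Kcong :: "('f::field \<Rightarrow> int) \<Rightarrow> nat \<Rightarrow> 'f \<Rightarrow> int \<Rightarrow> 'f mat set" where
  "Kcong v l \<rho> m = {g \<in> SO l \<rho>. \<forall>i<2*l. \<forall>j<2*l. in_pow v m (g $$ (i,j) - 1\<^sub>m (2*l) $$ (i,j))}"

definition tau :: "('f::field_char_0 \<Rightarrow> complex) \<Rightarrow> 'f \<Rightarrow> nat \<Rightarrow> int \<Rightarrow> 'f mat \<Rightarrow> complex" where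
  "tau \<psi> w l m k = \<psi> (w powi (-2*m) * ((\<Sum>i<l-2. k $$ (i, i+1)) + k $$ (l-2, l) / 2))"

text \<open>e_m = diag(w^(-2m(l-1)),...,w^(-2m),1,1,w^(2m),...,w^(2m(l-1))); note emat w l (-m) is
its inverse.\<close>
definition emat :: "'f::field \<Rightarrow> nat \<Rightarrow> int \<Rightarrow> 'f mat" where
  "emat w l m = mat (2*l) (2*l) (\<lambda>(i,j). if i = j then
       (if i < l then w powi (- (2*m*(int l - 1 - int i))) else w powi (2*m*(int i - int l)))
     else 0)"

definition Hm :: "('f::field \<Rightarrow> int) \<Rightarrow> 'f \<Rightarrow> nat \<Rightarrow> 'f \<Rightarrow> int \<Rightarrow> 'f mat set" where
  "Hm v w l \<rho> m = {emat w l m * k * emat w l (-m) | k. k \<in> Kcong v l \<rho> m}"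

definition psim :: "('f::field_char_0 \<Rightarrow> complex) \<Rightarrow> 'f \<Rightarrow> nat \<Rightarrow> int \<Rightarrow> 'f mat \<Rightarrow> complex" where
  "psim \<psi> w l m h = tau \<psi> w l m (emat w l (-m) * h * emat w l m)"

definition Um :: "('f::field \<Rightarrow> int) \<Rightarrow> 'f \<Rightarrow> nat \<Rightarrow> 'f \<Rightarrow> int \<Rightarrow> 'f mat set" where
  "Um v w l \<rho> m = Uunip l \<rho> \<inter> Hm v w l \<rho> m"

text \<open>For a compact open subgroup S of SO_2l and a function f on S that is right invariant
under a principal congruence subgroup S \<inter> (I + Mat(p^k)), the normalized Haar integral
Vol(S)^(-1) \<integral>_S f is the average of f over the finitely many cosets.\<close>
definition cong_sub :: "('f::field \<Rightarrow> int) \<Rightarrow> nat \<Rightarrow> int \<Rightarrow> 'f mat set" where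
  "cong_sub v n k = {g \<in> carrier_mat n n. \<forall>i<n. \<forall>j<n. in_pow v k (g $$ (i,j) - 1\<^sub>m n $$ (i,j))}"

definition haar_avg :: "('f::field \<Rightarrow> int) \<Rightarrow> nat \<Rightarrow> 'f mat set \<Rightarrow> ('f mat \<Rightarrow> complex) \<Rightarrow> complex" where
  "haar_avg v n S f = (THE c. \<exists>k\<ge>1.
     let N = S \<inter> cong_sub v n k; Cs = (\<lambda>u. (\<lambda>y. u * y) ` N) ` S in
       finite Cs \<and> (\<forall>x\<in>S. \<forall>y\<in>N. f (x * y) = f x) \<and>
       c = (\<Sum>C\<in>Cs. f (SOME x. x \<in> C)) / of_nat (card Cs))"

text \<open>W_m(g) = Vol(U_m)^(-1) \<integral>_{U_m} psi_m^(-1)(u) W(gu) du.\<close>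
definition Wm :: "('f::field_char_0 \<Rightarrow> int) \<Rightarrow> 'f \<Rightarrow> ('f \<Rightarrow> complex) \<Rightarrow> nat \<Rightarrow> 'f \<Rightarrow> int
                   \<Rightarrow> ('f mat \<Rightarrow> complex) \<Rightarrow> 'f mat \<Rightarrow> complex" where
  "Wm v w \<psi> l \<rho> m W g = haar_avg v (2*l) (Um v w l \<rho> m) (\<lambda>u. inverse (psim \<psi> w l m u) * W (g * u))"

definition smooth_rep :: "('f::field \<Rightarrow> int) \<Rightarrow> nat \<Rightarrow> 'f \<Rightarrow> (complex \<Rightarrow> 'v::ab_group_add \<Rightarrow> 'v)
                           \<Rightarrow> ('f mat \<Rightarrow> 'v \<Rightarrow> 'v) \<Rightarrow> bool" where
  "smooth_rep v l \<rho> sm \<pi> \<longleftrightarrow>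
     vector_space sm \<and>
     (\<forall>g\<in>SO l \<rho>. Vector_Spaces.linear sm sm (\<pi> g)) \<and>
     \<pi> (1\<^sub>m (2*l)) = id \<and>
     (\<forall>g\<in>SO l \<rho>. \<forall>h\<in>SO l \<rho>. \<pi> (g * h) = \<pi> g \<circ> \<pi> h) \<and>
     (\<forall>x. \<exists>m\<ge>1. \<forall>k\<in>Kcong v l \<rho> m. \<pi> k x = x)"

definition irreducible_rep :: "nat \<Rightarrow> 'f::field \<Rightarrow> (complex \<Rightarrow> 'v::ab_group_add \<Rightarrow> 'v)
                           \<Rightarrow> ('f mat \<Rightarrow> 'v \<Rightarrow> 'v) \<Rightarrow> bool" where
  "irreducible_rep l \<rho> sm \<pi> \<longleftrightarrow>
     (UNIV :: 'v set) \<noteq> {0} \<and>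
     (\<forall>S. module.subspace sm S \<and> (\<forall>g\<in>SO l \<rho>. \<forall>x\<in>S. \<pi> g x \<in> S) \<longrightarrow> S = {0} \<or> S = UNIV)"

definition whittaker_functional :: "('f::field_char_0 \<Rightarrow> complex) \<Rightarrow> nat \<Rightarrow> 'f
      \<Rightarrow> (complex \<Rightarrow> 'v::ab_group_add \<Rightarrow> 'v) \<Rightarrow> ('f mat \<Rightarrow> 'v \<Rightarrow> 'v) \<Rightarrow> ('v \<Rightarrow> complex) \<Rightarrow> bool" where
  "whittaker_functional \<psi> l \<rho> sm \<pi> \<Gamma> \<longleftrightarrow>
     Vector_Spaces.linear sm (*) \<Gamma> \<and>
     (\<forall>u\<in>Uunip l \<rho>. \<forall>x. \<Gamma> (\<pi> u x) = psiU \<psi> l u * \<Gamma> x)"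

text \<open>W(pi,psi) = {g \<mapsto> Gamma(pi(g)x)}; functions are compared on SO_2l(F) only.\<close>
definition whittaker_model :: "nat \<Rightarrow> 'f::field \<Rightarrow> ('f mat \<Rightarrow> 'v \<Rightarrow> 'v) \<Rightarrow> ('v \<Rightarrow> complex)
      \<Rightarrow> ('f mat \<Rightarrow> complex) set" where
  "whittaker_model l \<rho> \<pi> \<Gamma> = {W. \<exists>x. \<forall>g\<in>SO l \<rho>. W g = \<Gamma> (\<pi> g x)}"

end

theory Submission
  imports Defs
begin

locale vf =
  fixes v :: "'f::field_char_0 \<Rightarrow> int"
  assumes nl: "nonarch_local_field v"
begin

lemma vmul: "x \<noteq> 0 \<Longrightarrow> y \<noteq> 0 \<Longrightarrow> v (x * y) = v x + v y"
  using nl unfolding nonarch_local_field_def by blast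

lemma vadd: "x \<noteq> 0 \<Longrightarrow> y \<noteq> 0 \<Longrightarrow> x + y \<noteq> 0 \<Longrightarrow> min (v x) (v y) \<le> v (x + y)"
  using nl unfolding nonarch_local_field_def by blast

lemma v1: "v 1 = 0"
  using vmul[of 1 1] by simp

lemma vinv: "x \<noteq> 0 \<Longrightarrow> v (inverse x) = - v x"
  using vmul[of x "inverse x"] v1 by simp

lemma vm1: "v (-1) = 0"
  using vmul[of "-1" "-1"] v1 by simp

lemma vneg: "x \<noteq> 0 \<Longrightarrow> v (- x) = v x"
  using vmul[of "-1" x] vm1 by simp

lemma in_pow_0[simp]: "in_pow v k 0"
  by (simp add: in_pow_def)

lemma in_pow_one: "in_pow v 0 1"
  by (simp add: in_pow_def v1)

lemma in_pow_add: "in_pow v k x \<Longrightarrow> in_pow v k y \<Longrightarrow> in_pow v k (x + y)"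
  unfolding in_pow_def using vadd[of x y] by fastforce

lemma in_pow_neg: "in_pow v k x \<Longrightarrow> in_pow v k (- x)"
  unfolding in_pow_def using vneg[of x] by fastforce

lemma in_pow_diff: "in_pow v k x \<Longrightarrow> in_pow v k y \<Longrightarrow> in_pow v k (x - y)"
  using in_pow_add[of k x "-y"] in_pow_neg[of k y] by simp

lemma in_pow_mult: "in_pow v a x \<Longrightarrow> in_pow v b y \<Longrightarrow> in_pow v (a + b) (x * y)"
  unfolding in_pow_def using vmul[of x y] by fastforce

lemma in_pow_mono: "a \<le> b \<Longrightarrow> in_pow v b x \<Longrightarrow> in_pow v a x"
  unfolding in_pow_def by auto

lemma in_pow_sum: "(\<And>i. i \<in> A \<Longrightarrow> in_pow v k (f i)) \<Longrightarrow> in_pow v k (sum f A)"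
proof (induction A rule: infinite_finite_induct)
  case (insert x F)
  then show ?case by (simp add: in_pow_add)
qed auto

lemma in_pow_inv: "in_pow v k x \<Longrightarrow> x \<noteq> 0 \<Longrightarrow> in_pow v (- v x) (inverse x)"
  unfolding in_pow_def using vinv by auto

lemma v_pow: "w \<noteq> 0 \<Longrightarrow> v (w ^ n) = int n * v w"
  by (induction n) (auto simp: v1 vmul algebra_simps)

lemma v_powi: "w \<noteq> 0 \<Longrightarrow> v (w powi n) = n * v w"
  by (cases "n \<ge> 0") (auto simp: power_int_def v_pow vinv)

lemma in_pow_powi: "uniformizer v w \<Longrightarrow> in_pow v n (w powi n)"
  unfolding in_pow_def uniformizer_def using v_powi[of w n] by auto

end


lemma sum_split3:
  fixes g :: "nat \<Rightarrow> 'a::comm_monoid_add"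
  assumes "i < n"
  shows "(\<Sum>t<n. g t) = (\<Sum>t\<in>{0..<i}. g t) + g i + (\<Sum>t\<in>{Suc i..<n}. g t)"
proof -
  have "(\<Sum>t<n. g t) = (\<Sum>t\<in>{0..<n}. g t)" by (simp add: atLeast0LessThan)
  also have "\<dots> = (\<Sum>t\<in>{0..<i}. g t) + (\<Sum>t\<in>{i..<n}. g t)"
    using assms by (simp add: sum.atLeastLessThan_concat)
  also have "(\<Sum>t\<in>{i..<n}. g t) = g i + (\<Sum>t\<in>{Suc i..<n}. g t)"
    using assms by (simp add: sum.atLeast_Suc_lessThan)
  finally show ?thesis by (simp add: add.assoc)
qed

lemma mult_entry:
  assumes "A \<in> carrier_mat n n" "B \<in> carrier_mat n n" "i < n" "j < n"
  shows "(A * B) $$ (i,j) = (\<Sum>t<n. A $$ (i,t) * B $$ (t,j))"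
  using assms by (simp add: scalar_prod_def atLeast0LessThan)

definition ut :: "nat \<Rightarrow> 'a::{zero,one} mat \<Rightarrow> bool" where
  "ut n u \<longleftrightarrow> (\<forall>i<n. \<forall>j<n. (j < i \<longrightarrow> u $$ (i,j) = 0) \<and> (i = j \<longrightarrow> u $$ (i,j) = 1))"

lemma ut_one: "ut n (1\<^sub>m n)" by (simp add: ut_def)

lemma ut_inv:
  fixes A B :: "'a::comm_ring_1 mat"
  assumes A: "A \<in> carrier_mat n n" and B: "B \<in> carrier_mat n n"
    and uA: "ut n A" and AB: "A * B = 1\<^sub>m n"
    and PA: "\<And>i j. i < j \<Longrightarrow> j < n \<Longrightarrow> P (A $$ (i,j))"
    and P0: "P 0" and Padd: "\<And>x y. P x \<Longrightarrow> P y \<Longrightarrow> P (x + y)"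
    and Pneg: "\<And>x. P x \<Longrightarrow> P (- x)" and Pmul: "\<And>x y. P x \<Longrightarrow> P y \<Longrightarrow> P (x * y)"
  shows "ut n B \<and> (\<forall>i j. i < j \<longrightarrow> j < n \<longrightarrow> P (B $$ (i,j)))"
proof -
  have Psum: "(\<And>t. t \<in> S \<Longrightarrow> P (g t)) \<Longrightarrow> P (sum g S)" for g and S :: "nat set"
  proof (induction S rule: infinite_finite_induct)
    case (insert x F) then show ?case by (simp add: Padd)
  qed (auto simp: P0)
  have main: "\<forall>j<n. i < n \<longrightarrow> (j < i \<longrightarrow> B $$ (i,j) = 0) \<and> (i = j \<longrightarrow> B $$ (i,j) = 1)
      \<and> (i < j \<longrightarrow> P (B $$ (i,j)))" for i
  proof (induction "n - i" arbitrary: i rule: less_induct)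
    case less
    show ?case
    proof (intro allI impI)
      fix j assume j: "j < n" and i: "i < n"
      have IH: "\<And>t. i < t \<Longrightarrow> t < n \<Longrightarrow> (j < t \<longrightarrow> B $$ (t,j) = 0) \<and> (t = j \<longrightarrow> B $$ (t,j) = 1)
          \<and> (t < j \<longrightarrow> P (B $$ (t,j)))"
      proof -
        fix t assume "i < t" "t < n"
        then have "n - t < n - i" by simp
        then show "(j < t \<longrightarrow> B $$ (t,j) = 0) \<and> (t = j \<longrightarrow> B $$ (t,j) = 1)
          \<and> (t < j \<longrightarrow> P (B $$ (t,j)))" using less(1)[of t] j \<open>t < n\<close> by blast
      qed
      have "(1\<^sub>m n) $$ (i,j) = (\<Sum>t<n. A $$ (i,t) * B $$ (t,j))"
        using mult_entry[OF A B i j] AB by simp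
      also have "\<dots> = (\<Sum>t\<in>{0..<i}. A $$ (i,t) * B $$ (t,j)) + A $$ (i,i) * B $$ (i,j)
          + (\<Sum>t\<in>{Suc i..<n}. A $$ (i,t) * B $$ (t,j))" by (rule sum_split3[OF i])
      also have "(\<Sum>t\<in>{0..<i}. A $$ (i,t) * B $$ (t,j)) = 0"
        using uA i unfolding ut_def by (intro sum.neutral) auto
      also have "A $$ (i,i) = 1" using uA i unfolding ut_def by auto
      finally have eq: "B $$ (i,j) = (1\<^sub>m n) $$ (i,j) - (\<Sum>t\<in>{Suc i..<n}. A $$ (i,t) * B $$ (t,j))"
        by (simp add: algebra_simps)
      have z: "(\<Sum>t\<in>{Suc i..<n}. A $$ (i,t) * B $$ (t,j)) = 0" if "j \<le> i"
        using IH that by (intro sum.neutral) auto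
      show "(j < i \<longrightarrow> B $$ (i,j) = 0) \<and> (i = j \<longrightarrow> B $$ (i,j) = 1) \<and> (i < j \<longrightarrow> P (B $$ (i,j)))"
      proof (intro conjI impI)
        assume "j < i" then show "B $$ (i,j) = 0" using eq z i j by simp
      next
        assume "i = j" then show "B $$ (i,j) = 1" using eq z i j by simp
      next
        assume ij: "i < j"
        have "P (\<Sum>t\<in>{Suc i..<n}. A $$ (i,t) * B $$ (t,j))"
        proof (rule Psum)
          fix t assume t: "t \<in> {Suc i..<n}"
          then have "i < t" "t < n" by auto
          show "P (A $$ (i,t) * B $$ (t,j))"
          proof (cases "j < t")
            case True then show ?thesis using IH[OF \<open>i<t\<close> \<open>t<n\<close>] P0 by simp
          next
            case False
            show ?thesis
            proof (cases "t = j")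
              case True then show ?thesis using IH[OF \<open>i<t\<close> \<open>t<n\<close>] PA[OF \<open>i<t\<close> \<open>t<n\<close>] by simp
            next
              case False
              then have "t < j" using \<open>\<not> j < t\<close> by simp
              then show ?thesis using IH[OF \<open>i<t\<close> \<open>t<n\<close>] PA[OF \<open>i<t\<close> \<open>t<n\<close>] Pmul by simp
            qed
          qed
        qed
        then show "P (B $$ (i,j))" using eq ij i j Pneg by simp
      qed
    qed
  qed
  have m: "\<And>i j. j < n \<Longrightarrow> i < n \<Longrightarrow> (j < i \<longrightarrow> B $$ (i,j) = 0) \<and> (i = j \<longrightarrow> B $$ (i,j) = 1)
      \<and> (i < j \<longrightarrow> P (B $$ (i,j)))" by (rule main[rule_format])
  have "ut n B" unfolding ut_def using m by simp
  moreover have "\<forall>i j. i < j \<longrightarrow> j < n \<longrightarrow> P (B $$ (i,j))"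
  proof (intro allI impI)
    fix i j assume "i < j" "j < n"
    then show "P (B $$ (i,j))" using m[of j i] by simp
  qed
  ultimately show ?thesis by simp
qed

lemma ut_mult:
  fixes A B :: "'a::comm_ring_1 mat"
  assumes A: "A \<in> carrier_mat n n" and B: "B \<in> carrier_mat n n" and "ut n A" "ut n B"
  shows "ut n (A * B)"
  unfolding ut_def
proof (intro allI impI conjI)
  fix i j assume i: "i < n" and j: "j < n"
  have e: "(A * B) $$ (i,j) = (\<Sum>t\<in>{0..<i}. A $$ (i,t) * B $$ (t,j)) + A $$ (i,i) * B $$ (i,j)
          + (\<Sum>t\<in>{Suc i..<n}. A $$ (i,t) * B $$ (t,j))"
    using mult_entry[OF A B i j] sum_split3[OF i] by simp
  have z1: "(\<Sum>t\<in>{0..<i}. A $$ (i,t) * B $$ (t,j)) = 0"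
    using assms(3) i unfolding ut_def by (intro sum.neutral) auto
  have z2: "(\<Sum>t\<in>{Suc i..<n}. A $$ (i,t) * B $$ (t,j)) = 0" if "j \<le> i"
    using assms(4) that j unfolding ut_def by (intro sum.neutral) auto
  have d: "A $$ (i,i) = 1" using assms(3) i unfolding ut_def by auto
  show "j < i \<Longrightarrow> (A * B) $$ (i,j) = 0" using e z1 z2 d assms(4) i j unfolding ut_def by simp
  show "i = j \<Longrightarrow> (A * B) $$ (i,j) = 1" using e z1 z2 d assms(4) i j unfolding ut_def by simp
qed

definition dg :: "nat \<Rightarrow> (nat \<Rightarrow> 'a::zero) \<Rightarrow> 'a mat" where
  "dg n d = mat n n (\<lambda>(i,j). if i = j then d i else 0)"

lemma dg_carrier[simp]: "dg n d \<in> carrier_mat n n" by (simp add: dg_def)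

lemma dg_left:
  fixes A :: "'a::comm_ring_1 mat"
  assumes A: "A \<in> carrier_mat n n" and i: "i < n" and j: "j < n"
  shows "(dg n d * A) $$ (i,j) = d i * A $$ (i,j)"
proof -
  have "(dg n d * A) $$ (i,j) = (\<Sum>t<n. dg n d $$ (i,t) * A $$ (t,j))"
    using mult_entry[OF dg_carrier A i j] .
  also have "\<dots> = (\<Sum>t<n. if t = i then d i * A $$ (i,j) else 0)"
    using i by (intro sum.cong) (auto simp: dg_def)
  finally show ?thesis using i by simp
qed

lemma dg_right:
  fixes A :: "'a::comm_ring_1 mat"
  assumes A: "A \<in> carrier_mat n n" and i: "i < n" and j: "j < n"
  shows "(A * dg n d) $$ (i,j) = A $$ (i,j) * d j"
proof -
  have "(A * dg n d) $$ (i,j) = (\<Sum>t<n. A $$ (i,t) * dg n d $$ (t,j))"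
    using mult_entry[OF A dg_carrier i j] .
  also have "\<dots> = (\<Sum>t<n. if t = j then A $$ (i,j) * d j else 0)"
    using j by (intro sum.cong) (auto simp: dg_def)
  finally show ?thesis using j by simp
qed

lemma dg_conj:
  fixes A :: "'a::comm_ring_1 mat"
  assumes A: "A \<in> carrier_mat n n" and i: "i < n" and j: "j < n"
  shows "(dg n d * A * dg n d') $$ (i,j) = d i * A $$ (i,j) * d' j"
proof -
  have "dg n d * A \<in> carrier_mat n n" by (rule mult_carrier_mat[OF dg_carrier A])
  then show ?thesis using dg_right[OF _ i j, of "dg n d * A" d'] dg_left[OF A i j, of d] by simp
qed

lemma dg_mult:
  fixes d :: "nat \<Rightarrow> 'a::comm_ring_1"
  shows "dg n d * dg n d' = dg n (\<lambda>i. d i * d' i)"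
proof (rule eq_matI)
  fix i j assume "i < dim_row (dg n (\<lambda>i. d i * d' i))" "j < dim_col (dg n (\<lambda>i. d i * d' i))"
  then have ij: "i < n" "j < n" by (auto simp: dg_def)
  show "(dg n d * dg n d') $$ (i,j) = dg n (\<lambda>i. d i * d' i) $$ (i,j)"
    using dg_right[OF dg_carrier ij, of d d'] ij by (simp add: dg_def)
qed (auto simp: dg_def)

definition ex :: "nat \<Rightarrow> int \<Rightarrow> nat \<Rightarrow> int" where
  "ex l m i = (if i < l then - (2*m*(int l - 1 - int i)) else 2*m*(int i - int l))"

lemma emat_dg: "emat w l m = dg (2*l) (\<lambda>i. w powi ex l m i)"
  unfolding emat_def dg_def ex_def by (rule eq_matI) auto

lemma ex_neg: "ex l (-m) i = - ex l m i" by (simp add: ex_def)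

lemma ex_bound: "i < 2*l \<Longrightarrow> 0 \<le> m \<Longrightarrow> \<bar>ex l m i\<bar> \<le> 2*m*int l"
proof -
  assume i: "i < 2*l" and m: "0 \<le> m"
  show ?thesis
  proof (cases "i < l")
    case True
    have "0 \<le> 2*m*(int l - 1 - int i)" using True m by simp
    moreover have "2*m*(int l - 1 - int i) \<le> 2*m*int l" using True m by (intro mult_left_mono) auto
    ultimately show ?thesis using True by (simp add: ex_def)
  next
    case False
    have "0 \<le> 2*m*(int i - int l)" using False m by simp
    moreover have "2*m*(int i - int l) \<le> 2*m*int l" using False i m by (intro mult_left_mono) auto
    ultimately show ?thesis using False by (simp add: ex_def)
  qed
qed

lemma emat_inv:
  fixes w :: "'a::field"
  assumes "w \<noteq> 0"
  shows "emat w l m * emat w l (-m) = 1\<^sub>m (2*l)" "emat w l (-m) * emat w l m = 1\<^sub>m (2*l)"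
  unfolding emat_dg dg_mult ex_neg using assms
  by (auto intro!: eq_matI simp: dg_def power_int_minus)

lemma emat_carrier[simp]: "emat w l m \<in> carrier_mat (2*l) (2*l)"
  by (simp add: emat_def)

lemma emat_conj:
  fixes w :: "'a::field"
  assumes A: "A \<in> carrier_mat (2*l) (2*l)" and i: "i < 2*l" and j: "j < 2*l"
  shows "(emat w l m * A * emat w l (-m)) $$ (i,j) = w powi ex l m i * A $$ (i,j) * w powi (- ex l m j)"
  unfolding emat_dg using dg_conj[OF A i j] by (simp add: ex_neg)



context group
begin

definition cs :: "'a set \<Rightarrow> 'a set set" where
  "cs N = (\<lambda>u. (\<lambda>y. u \<otimes> y) ` N) ` carrier G"

lemma coset_sub: "subgroup N G \<Longrightarrow> u \<in> carrier G \<Longrightarrow> (\<lambda>y. u \<otimes> y) ` N \<subseteq> carrier G"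
  using subgroup.subset[of N G] by (auto intro!: m_closed)

lemma coset_self: "subgroup N G \<Longrightarrow> u \<in> carrier G \<Longrightarrow> u \<in> (\<lambda>y. u \<otimes> y) ` N"
  using subgroup.one_closed[of N G] by (intro image_eqI[of _ _ \<one>]) auto

lemma coset_eq:
  assumes N: "subgroup N G" and u: "u \<in> carrier G" and x: "x \<in> (\<lambda>y. u \<otimes> y) ` N"
  shows "(\<lambda>y. x \<otimes> y) ` N = (\<lambda>y. u \<otimes> y) ` N"
proof -
  obtain n where n: "n \<in> N" and xe: "x = u \<otimes> n" using x by auto
  have nG: "n \<in> carrier G" by (rule subgroup.mem_carrier[OF N n])
  have iN: "inv n \<in> N" by (rule subgroup.m_inv_closed[OF N n])
  show ?thesis
  proof
    show "(\<lambda>y. x \<otimes> y) ` N \<subseteq> (\<lambda>y. u \<otimes> y) ` N"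
    proof
      fix z assume "z \<in> (\<lambda>y. x \<otimes> y) ` N"
      then obtain y where y: "y \<in> N" "z = x \<otimes> y" by auto
      have yG: "y \<in> carrier G" by (rule subgroup.mem_carrier[OF N y(1)])
      have "z = u \<otimes> (n \<otimes> y)" using y xe u nG yG by (simp add: m_assoc)
      moreover have "n \<otimes> y \<in> N" by (rule subgroup.m_closed[OF N n y(1)])
      ultimately show "z \<in> (\<lambda>y. u \<otimes> y) ` N" by blast
    qed
  next
    show "(\<lambda>y. u \<otimes> y) ` N \<subseteq> (\<lambda>y. x \<otimes> y) ` N"
    proof
      fix z assume "z \<in> (\<lambda>y. u \<otimes> y) ` N"
      then obtain y where y: "y \<in> N" "z = u \<otimes> y" by auto
      have yG: "y \<in> carrier G" by (rule subgroup.mem_carrier[OF N y(1)])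
      have "z = x \<otimes> (inv n \<otimes> y)" using y xe u nG yG
        by (simp add: m_assoc[symmetric] r_inv) (simp add: m_assoc)
      moreover have "inv n \<otimes> y \<in> N" by (rule subgroup.m_closed[OF N iN y(1)])
      ultimately show "z \<in> (\<lambda>y. x \<otimes> y) ` N" by blast
    qed
  qed
qed

lemma coset_const:
  assumes N: "subgroup N G" and u: "u \<in> carrier G" and x: "x \<in> (\<lambda>y. u \<otimes> y) ` N"
    and inv: "\<forall>x\<in>carrier G. \<forall>y\<in>N. f (x \<otimes> y) = f x"
  shows "f x = f u"
  using x inv u by auto

lemma some_in: "subgroup N G \<Longrightarrow> C \<in> cs N \<Longrightarrow> (SOME x. x \<in> C) \<in> C"
  unfolding cs_def using coset_self by (metis (no_types, lifting) image_iff someI_ex)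

lemma coset_comp: "a \<in> carrier G \<Longrightarrow> c \<in> carrier G \<Longrightarrow> N \<subseteq> carrier G \<Longrightarrow>
   (\<lambda>y. c \<otimes> y) ` ((\<lambda>y. a \<otimes> y) ` N) = (\<lambda>y. (c \<otimes> a) \<otimes> y) ` N"
  by (auto simp: image_image m_assoc subset_iff intro!: image_cong)

lemma one_img: "N \<subseteq> carrier G \<Longrightarrow> (\<lambda>y. \<one> \<otimes> y) ` N = N"
proof -
  assume "N \<subseteq> carrier G"
  then have "(\<lambda>y. \<one> \<otimes> y) ` N = (\<lambda>y. y) ` N" by (intro image_cong) auto
  then show ?thesis by simp
qed

lemma avg_refine:
  fixes f :: "'a \<Rightarrow> complex"
  assumes N: "subgroup N G" and N': "subgroup N' G" and sub: "N' \<subseteq> N"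
    and fin: "finite (cs N)" and fin': "finite (cs N')"
    and inv: "\<forall>x\<in>carrier G. \<forall>y\<in>N. f (x \<otimes> y) = f x"
  shows "(\<Sum>C\<in>cs N'. f (SOME x. x \<in> C)) / of_nat (card (cs N'))
       = (\<Sum>C\<in>cs N. f (SOME x. x \<in> C)) / of_nat (card (cs N))"
proof -
  define rep where "rep C = (SOME x. x \<in> C)" for C :: "'a set"
  define g where "g C' = (\<lambda>y. rep C' \<otimes> y) ` N" for C'
  define fib where "fib C = {C' \<in> cs N'. C' \<subseteq> C}" for C
  have NG: "N \<subseteq> carrier G" and N'G: "N' \<subseteq> carrier G" using subgroup.subset[OF N] subgroup.subset[OF N'] by auto
  have rep_in: "rep C \<in> C" if "C \<in> cs N'" for C using some_in[OF N' that] rep_def by simp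
  have repG: "rep C \<in> carrier G" if "C \<in> cs N'" for C
    using rep_in[OF that] that coset_sub[OF N'] unfolding cs_def by blast
  have g_in: "g C' \<in> cs N" if "C' \<in> cs N'" for C' unfolding g_def cs_def using repG[OF that] by blast
  have gfib: "{C' \<in> cs N'. g C' = C} = fib C" if C: "C \<in> cs N" for C
  proof -
    have "g C' = C \<longleftrightarrow> C' \<subseteq> C" if C': "C' \<in> cs N'" for C'
    proof -
      obtain a where a: "a \<in> carrier G" and C'e: "C' = (\<lambda>y. a \<otimes> y) ` N'" using C' unfolding cs_def by auto
      obtain u where u: "u \<in> carrier G" and Ce: "C = (\<lambda>y. u \<otimes> y) ` N" using C unfolding cs_def by auto
      have aN: "(\<lambda>y. a \<otimes> y) ` N' \<subseteq> (\<lambda>y. a \<otimes> y) ` N" using sub by auto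
      have "rep C' \<in> (\<lambda>y. a \<otimes> y) ` N" using rep_in[OF C'] aN C'e by auto
      then have gC': "g C' = (\<lambda>y. a \<otimes> y) ` N" unfolding g_def using coset_eq[OF N a] by blast
      show ?thesis
      proof
        assume "g C' = C" then show "C' \<subseteq> C" using gC' aN C'e by simp
      next
        assume "C' \<subseteq> C"
        then have "a \<in> C" using coset_self[OF N' a] C'e by auto
        then show "g C' = C" using gC' coset_eq[OF N u] Ce by simp
      qed
    qed
    then show ?thesis unfolding fib_def by auto
  qed
  have fibfin: "finite (fib C)" for C using fin' unfolding fib_def by simp
  have fibcard: "card (fib C) = card (fib N)" if C: "C \<in> cs N" for C
  proof -
    obtain u where u: "u \<in> carrier G" and Ce: "C = (\<lambda>y. u \<otimes> y) ` N" using C unfolding cs_def by auto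
    have iu: "inv u \<in> carrier G" using u by simp
    have "bij_betw (\<lambda>C'. (\<lambda>y. inv u \<otimes> y) ` C') (fib C) (fib N)"
    proof (rule bij_betw_byWitness[where f' = "\<lambda>D. (\<lambda>y. u \<otimes> y) ` D"])
      show "\<forall>a\<in>fib C. (\<lambda>y. u \<otimes> y) ` (\<lambda>y. inv u \<otimes> y) ` a = a"
      proof
        fix C' assume "C' \<in> fib C"
        then obtain a where a: "a \<in> carrier G" and e: "C' = (\<lambda>y. a \<otimes> y) ` N'" unfolding fib_def cs_def by auto
        show "(\<lambda>y. u \<otimes> y) ` (\<lambda>y. inv u \<otimes> y) ` C' = C'"
          unfolding e using a u iu N'G by (simp add: coset_comp m_assoc[symmetric])
      qed
      show "\<forall>a'\<in>fib N. (\<lambda>y. inv u \<otimes> y) ` (\<lambda>y. u \<otimes> y) ` a' = a'"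
      proof
        fix C' assume "C' \<in> fib N"
        then obtain a where a: "a \<in> carrier G" and e: "C' = (\<lambda>y. a \<otimes> y) ` N'" unfolding fib_def cs_def by auto
        show "(\<lambda>y. inv u \<otimes> y) ` (\<lambda>y. u \<otimes> y) ` C' = C'"
          unfolding e using a u iu N'G by (simp add: coset_comp m_assoc[symmetric])
      qed
      show "(\<lambda>C'. (\<lambda>y. inv u \<otimes> y) ` C') ` fib C \<subseteq> fib N"
      proof
        fix D assume "D \<in> (\<lambda>C'. (\<lambda>y. inv u \<otimes> y) ` C') ` fib C"
        then obtain C' where C': "C' \<in> fib C" and De: "D = (\<lambda>y. inv u \<otimes> y) ` C'" by auto
        then obtain a where a: "a \<in> carrier G" and e: "C' = (\<lambda>y. a \<otimes> y) ` N'" unfolding fib_def cs_def by auto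
        have D2: "D = (\<lambda>y. (inv u \<otimes> a) \<otimes> y) ` N'" using De e coset_comp[OF a iu N'G] by simp
        have "D \<in> cs N'" unfolding D2 cs_def using a iu by blast
        moreover have "D \<subseteq> (\<lambda>y. inv u \<otimes> y) ` C" using De C' unfolding fib_def by auto
        moreover have "(\<lambda>y. inv u \<otimes> y) ` C = N"
        proof -
          have "(\<lambda>y. \<one> \<otimes> y) ` N = (\<lambda>y. y) ` N" using NG by (intro image_cong) auto
          then show ?thesis unfolding Ce using coset_comp[OF u iu NG] u by simp
        qed
        ultimately show "D \<in> fib N" unfolding fib_def by auto
      qed
      show "(\<lambda>D. (\<lambda>y. u \<otimes> y) ` D) ` fib N \<subseteq> fib C"
      proof
        fix D assume "D \<in> (\<lambda>D. (\<lambda>y. u \<otimes> y) ` D) ` fib N"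
        then obtain C' where C': "C' \<in> fib N" and De: "D = (\<lambda>y. u \<otimes> y) ` C'" by auto
        then obtain a where a: "a \<in> carrier G" and e: "C' = (\<lambda>y. a \<otimes> y) ` N'" unfolding fib_def cs_def by auto
        have D2: "D = (\<lambda>y. (u \<otimes> a) \<otimes> y) ` N'" using De e coset_comp[OF a u N'G] by simp
        have "D \<in> cs N'" unfolding D2 cs_def using a u by blast
        moreover have "D \<subseteq> C" using De C' Ce unfolding fib_def by auto
        ultimately show "D \<in> fib C" unfolding fib_def by auto
      qed
    qed
    then show ?thesis by (rule bij_betw_same_card)
  qed
  define d where "d = card (fib N)"
  have "N' \<in> cs N'" unfolding cs_def by (rule image_eqI[of _ _ \<one>]) (simp_all add: one_img[OF N'G])
  then have "N' \<in> fib N" unfolding fib_def using sub by auto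
  then have dpos: "d > 0" unfolding d_def using fibfin card_gt_0_iff by blast
  have gimg: "g ` cs N' \<subseteq> cs N" using g_in by blast
  have S1: "(\<Sum>C\<in>cs N'. f (rep C)) = (\<Sum>C\<in>cs N. \<Sum>C'\<in>{C' \<in> cs N'. g C' = C}. f (rep C'))"
    using sum.group[OF fin' fin gimg, of "\<lambda>C. f (rep C)"] by simp
  also have "\<dots> = (\<Sum>C\<in>cs N. of_nat d * f (rep C))"
  proof (rule sum.cong[OF refl])
    fix C assume C: "C \<in> cs N"
    have "(\<Sum>C'\<in>{C' \<in> cs N'. g C' = C}. f (rep C')) = (\<Sum>C'\<in>{C' \<in> cs N'. g C' = C}. f (rep C))"
    proof (rule sum.cong[OF refl])
      fix C' assume C': "C' \<in> {C' \<in> cs N'. g C' = C}"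
      then have C'1: "C' \<in> cs N'" and gC: "g C' = C" by auto
      have "rep C \<in> C" using some_in[OF N C] rep_def by simp
      then have "rep C \<in> (\<lambda>y. rep C' \<otimes> y) ` N" using gC g_def by simp
      then show "f (rep C') = f (rep C)" using coset_const[OF N repG[OF C'1] _ inv] by simp
    qed
    also have "\<dots> = of_nat (card (fib C)) * f (rep C)" using gfib[OF C] by simp
    finally show "(\<Sum>C'\<in>{C' \<in> cs N'. g C' = C}. f (rep C')) = of_nat d * f (rep C)"
      using fibcard[OF C] d_def by simp
  qed
  also have "\<dots> = of_nat d * (\<Sum>C\<in>cs N. f (rep C))" by (simp add: sum_distrib_left)
  finally have S: "(\<Sum>C\<in>cs N'. f (rep C)) = of_nat d * (\<Sum>C\<in>cs N. f (rep C))" .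
  have "card (cs N') = (\<Sum>C\<in>cs N'. (1::nat))" by simp
  also have "\<dots> = (\<Sum>C\<in>cs N. \<Sum>C'\<in>{C' \<in> cs N'. g C' = C}. 1)"
    using sum.group[OF fin' fin gimg, of "\<lambda>C. (1::nat)"] by simp
  also have "\<dots> = (\<Sum>C\<in>cs N. d)"
    using gfib fibcard d_def by (intro sum.cong) auto
  finally have K: "card (cs N') = d * card (cs N)" by simp
  show ?thesis unfolding rep_def[symmetric] S K using dpos by simp
qed

end


lemma massoc: "dim_col A = dim_row B \<Longrightarrow> dim_col B = dim_row C \<Longrightarrow> (A * B) * C = A * (B * (C::'a::semiring_0 mat))"
  by (rule assoc_mult_mat[of A "dim_row A" "dim_col A" B "dim_col B" C "dim_col C"]) auto

lemma Jrho_carrier[simp]: "Jrho l \<rho> \<in> carrier_mat (2*l) (2*l)"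
  unfolding Jrho_def by (rule mult_carrier_mat) (auto simp: Jmat_def)

lemma Jrho_dims[simp]: "dim_row (Jrho l \<rho>) = 2*l" "dim_col (Jrho l \<rho>) = 2*l"
  by (rule carrier_matD[OF Jrho_carrier])+

lemma SO_carrier: "g \<in> SO l \<rho> \<Longrightarrow> g \<in> carrier_mat (2*l) (2*l)"
  unfolding SO_def by simp

lemma SO_one: "(1\<^sub>m (2*l) :: 'f::field mat) \<in> SO l \<rho>"
  unfolding SO_def by simp

lemma SO_mult:
  fixes g h :: "'f::field mat"
  assumes g: "g \<in> SO l \<rho>" and h: "h \<in> SO l \<rho>"
  shows "g * h \<in> SO l \<rho>"
proof -
  have gc: "g \<in> carrier_mat (2*l) (2*l)" and hc: "h \<in> carrier_mat (2*l) (2*l)"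
    using g h SO_carrier by auto
  have J: "Jrho l \<rho> \<in> carrier_mat (2*l) (2*l)" by simp
  have dg: "det g = 1" "transpose_mat g * Jrho l \<rho> * g = Jrho l \<rho>" using g unfolding SO_def by auto
  have dh: "det h = 1" "transpose_mat h * Jrho l \<rho> * h = Jrho l \<rho>" using h unfolding SO_def by auto
  have "transpose_mat (g * h) * Jrho l \<rho> * (g * h) = transpose_mat h * (transpose_mat g * Jrho l \<rho> * g) * h"
    using gc hc by (simp add: transpose_mult[OF gc hc] massoc)
  also have "\<dots> = Jrho l \<rho>" using dg dh by simp
  finally show ?thesis unfolding SO_def using gc hc dg dh det_mult[OF gc hc] by simp
qed

lemma SO_inv:
  fixes g :: "'f::field mat"
  assumes g: "g \<in> SO l \<rho>"
  shows "\<exists>g'\<in>SO l \<rho>. g * g' = 1\<^sub>m (2*l) \<and> g' * g = 1\<^sub>m (2*l)"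
proof -
  have gc: "g \<in> carrier_mat (2*l) (2*l)" using g SO_carrier by auto
  have J: "Jrho l \<rho> \<in> carrier_mat (2*l) (2*l)" by simp
  have dg: "det g = 1" and Jg: "transpose_mat g * Jrho l \<rho> * g = Jrho l \<rho>" using g unfolding SO_def by auto
  have "g \<in> Units (ring_mat TYPE('f) (2*l) ())"
    using det_non_zero_imp_unit[OF gc] dg by simp
  then obtain g' where g'c: "g' \<in> carrier_mat (2*l) (2*l)" and i1: "g' * g = 1\<^sub>m (2*l)" and i2: "g * g' = 1\<^sub>m (2*l)"
    unfolding Units_def ring_mat_simps by auto
  have "det g * det g' = 1" using det_mult[OF gc g'c] i2 by simp
  then have dg': "det g' = 1" using dg by simp
  have "transpose_mat g' * Jrho l \<rho> * g' = transpose_mat g' * (transpose_mat g * Jrho l \<rho> * g) * g'"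
    using Jg by simp
  also have "\<dots> = transpose_mat (g * g') * Jrho l \<rho> * (g * g')"
    using gc g'c by (simp add: transpose_mult[OF gc g'c] massoc)
  also have "\<dots> = Jrho l \<rho>" using i2 J by simp
  finally show ?thesis unfolding SO_def using g'c dg' i1 i2 by auto
qed

lemma Uunip_iff: "u \<in> Uunip l \<rho> \<longleftrightarrow> u \<in> SO l \<rho> \<and> ut (2*l) u"
  unfolding Uunip_def ut_def by auto

lemma Kcong_iff: "h \<in> Kcong v l \<rho> m \<longleftrightarrow> h \<in> SO l \<rho> \<and> (\<forall>i<2*l. \<forall>j<2*l. in_pow v m (h $$ (i,j) - 1\<^sub>m (2*l) $$ (i,j)))"
  unfolding Kcong_def by auto

lemma emat_dims[simp]: "dim_row (emat w l m) = 2*l" "dim_col (emat w l m) = 2*l"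
  by (simp_all add: emat_def)

locale vfw = vf v for v :: "'f::field_char_0 \<Rightarrow> int" +
  fixes w :: 'f
  assumes unif: "uniformizer v w"
begin

lemma w0: "w \<noteq> 0" using unif unfolding uniformizer_def by simp

lemma einv[simp]: "emat w l m * emat w l (-m) = 1\<^sub>m (2*l)" "emat w l (-m) * emat w l m = 1\<^sub>m (2*l)"
  using emat_inv[OF w0] by auto

lemma ecancel[simp]: "dim_row X = 2*l \<Longrightarrow> emat w l (-m) * (emat w l m * X) = X"
  "dim_row X = 2*l \<Longrightarrow> emat w l m * (emat w l (-m) * X) = X"
  by (simp_all add: massoc[symmetric])

lemma Hm_iff: "u \<in> Hm v w l \<rho> m \<longleftrightarrow> (\<exists>h\<in>Kcong v l \<rho> m. u = emat w l m * h * emat w l (-m))"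
  unfolding Hm_def by auto

lemma conj_back:
  assumes "h \<in> carrier_mat (2*l) (2*l)"
  shows "emat w l (-m) * (emat w l m * h * emat w l (-m)) * emat w l m = h"
  using assms by (simp add: massoc)

lemma in_pow_delta: "in_pow v 0 (1\<^sub>m n $$ (i,j))" if "i < n" "j < n"
  using that in_pow_one by simp

lemma Kcong_O: assumes "h \<in> Kcong v l \<rho> m" "0 \<le> m" "i < 2*l" "j < 2*l"
  shows "in_pow v 0 (h $$ (i,j))"
proof -
  have "in_pow v m (h $$ (i,j) - 1\<^sub>m (2*l) $$ (i,j))" using assms unfolding Kcong_def by auto
  then have "in_pow v 0 (h $$ (i,j) - 1\<^sub>m (2*l) $$ (i,j))" using in_pow_mono assms(2) by blast
  from in_pow_add[OF this in_pow_delta[OF assms(3,4)]] show ?thesis by simp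
qed

lemma prod_close:
  assumes A: "A \<in> carrier_mat n n" and B: "B \<in> carrier_mat n n"
    and Aa: "\<And>i j. i < n \<Longrightarrow> j < n \<Longrightarrow> in_pow v a (A $$ (i,j))"
    and Bb: "\<And>i j. i < n \<Longrightarrow> j < n \<Longrightarrow> in_pow v b (B $$ (i,j) - 1\<^sub>m n $$ (i,j))"
    and i: "i < n" and j: "j < n"
  shows "in_pow v (a + b) ((A * B) $$ (i,j) - A $$ (i,j))"
proof -
  have "A $$ (i,j) = (A * 1\<^sub>m n) $$ (i,j)" using A by simp
  also have "\<dots> = (\<Sum>t<n. A $$ (i,t) * 1\<^sub>m n $$ (t,j))" using mult_entry[OF A one_carrier_mat i j] .
  finally have "(A * B) $$ (i,j) - A $$ (i,j) = (\<Sum>t<n. A $$ (i,t) * B $$ (t,j)) - (\<Sum>t<n. A $$ (i,t) * 1\<^sub>m n $$ (t,j))"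
    using mult_entry[OF A B i j] by simp
  also have "\<dots> = (\<Sum>t<n. A $$ (i,t) * (B $$ (t,j) - 1\<^sub>m n $$ (t,j)))"
    by (simp add: sum_subtractf right_diff_distrib)
  finally show ?thesis using Aa Bb i j by (auto intro!: in_pow_sum in_pow_mult)
qed

lemma Kcong_mult:
  assumes h1: "h1 \<in> Kcong v l \<rho> m" and h2: "h2 \<in> Kcong v l \<rho> m" and m: "0 \<le> m"
  shows "h1 * h2 \<in> Kcong v l \<rho> m"
proof -
  have c1: "h1 \<in> carrier_mat (2*l) (2*l)" and c2: "h2 \<in> carrier_mat (2*l) (2*l)"
    using h1 h2 SO_carrier unfolding Kcong_def by auto
  have "in_pow v m ((h1 * h2) $$ (i,j) - 1\<^sub>m (2*l) $$ (i,j))" if ij: "i < 2*l" "j < 2*l" for i j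
  proof -
    have "in_pow v (0 + m) ((h1 * h2) $$ (i,j) - h1 $$ (i,j))"
      by (rule prod_close[OF c1 c2 Kcong_O[OF h1 m] _ ij]) (use h2 in \<open>auto simp: Kcong_def\<close>)
    moreover have "in_pow v m (h1 $$ (i,j) - 1\<^sub>m (2*l) $$ (i,j))" using h1 ij unfolding Kcong_def by auto
    ultimately show ?thesis using in_pow_add by fastforce
  qed
  then show ?thesis using SO_mult h1 h2 unfolding Kcong_def by auto
qed

lemma Um_SO: "u \<in> Um v w l \<rho> m \<Longrightarrow> u \<in> SO l \<rho>"
  unfolding Um_def Uunip_def by auto

lemma Um_carrier: "u \<in> Um v w l \<rho> m \<Longrightarrow> u \<in> carrier_mat (2*l) (2*l)"
  using Um_SO SO_carrier by blast

lemma Um_ut: "u \<in> Um v w l \<rho> m \<Longrightarrow> ut (2*l) u"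
  by (simp add: Um_def Uunip_iff)

lemma Um_one: "1\<^sub>m (2*l) \<in> Um v w l \<rho> m"
proof -
  have "1\<^sub>m (2*l) \<in> Kcong v l \<rho> m" unfolding Kcong_def using SO_one by auto
  moreover have "1\<^sub>m (2*l) = emat w l m * 1\<^sub>m (2*l) * emat w l (-m)" by simp
  ultimately have "1\<^sub>m (2*l) \<in> Hm v w l \<rho> m" unfolding Hm_iff by blast
  moreover have "1\<^sub>m (2*l) \<in> Uunip l \<rho>" by (simp add: Uunip_iff SO_one ut_one)
  ultimately show ?thesis unfolding Um_def by simp
qed

lemma Um_mult:
  assumes u1: "u1 \<in> Um v w l \<rho> m" and u2: "u2 \<in> Um v w l \<rho> m" and m: "0 \<le> m"
  shows "u1 * u2 \<in> Um v w l \<rho> m"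
proof -
  obtain h1 where h1: "h1 \<in> Kcong v l \<rho> m" and e1: "u1 = emat w l m * h1 * emat w l (-m)"
    using u1 unfolding Um_def by (auto simp: Hm_iff)
  obtain h2 where h2: "h2 \<in> Kcong v l \<rho> m" and e2: "u2 = emat w l m * h2 * emat w l (-m)"
    using u2 unfolding Um_def by (auto simp: Hm_iff)
  have c1: "h1 \<in> carrier_mat (2*l) (2*l)" and c2: "h2 \<in> carrier_mat (2*l) (2*l)"
    using h1 h2 SO_carrier unfolding Kcong_def by auto
  have "u1 * u2 = emat w l m * (h1 * h2) * emat w l (-m)"
    unfolding e1 e2 using c1 c2 by (simp add: massoc)
  then have "u1 * u2 \<in> Hm v w l \<rho> m" unfolding Hm_iff using Kcong_mult[OF h1 h2 m] by blast
  moreover have "u1 * u2 \<in> Uunip l \<rho>" unfolding Uunip_iff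
    using SO_mult[OF Um_SO[OF u1] Um_SO[OF u2]] ut_mult[OF Um_carrier[OF u1] Um_carrier[OF u2] Um_ut[OF u1] Um_ut[OF u2]]
    by simp
  ultimately show ?thesis unfolding Um_def by simp
qed

lemma ecancel_r[simp]: "dim_col X = 2*l \<Longrightarrow> X * emat w l m * emat w l (-m) = X"
  "dim_col X = 2*l \<Longrightarrow> X * emat w l (-m) * emat w l m = X"
  by (simp_all add: massoc)

lemma conj_entry:
  assumes A: "A \<in> carrier_mat (2*l) (2*l)" and i: "i < 2*l" and j: "j < 2*l"
  shows "(emat w l (-m) * A * emat w l m) $$ (i,j) = w powi (- ex l m i) * A $$ (i,j) * w powi (ex l m j)"
  using emat_conj[OF A i j, of w "-m"] by (simp add: ex_neg)

lemma Um_inv: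
  assumes u: "u \<in> Um v w l \<rho> m" and m: "0 \<le> m"
  shows "\<exists>u'\<in>Um v w l \<rho> m. u * u' = 1\<^sub>m (2*l) \<and> u' * u = 1\<^sub>m (2*l)"
proof -
  obtain h where h: "h \<in> Kcong v l \<rho> m" and e: "u = emat w l m * h * emat w l (-m)"
    using u unfolding Um_def by (auto simp: Hm_iff)
  have hc: "h \<in> carrier_mat (2*l) (2*l)" using h SO_carrier unfolding Kcong_def by auto
  have uc: "u \<in> carrier_mat (2*l) (2*l)" using Um_carrier[OF u] .
  obtain u' where u'S: "u' \<in> SO l \<rho>" and uu': "u * u' = 1\<^sub>m (2*l)" and u'u: "u' * u = 1\<^sub>m (2*l)"
    using SO_inv[OF Um_SO[OF u]] by blast
  have u'c: "u' \<in> carrier_mat (2*l) (2*l)" using u'S SO_carrier by auto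
  have utu': "ut (2*l) u'"
    using ut_inv[OF uc u'c Um_ut[OF u] uu', of "\<lambda>_. True"] by simp
  have he: "h = emat w l (-m) * u * emat w l m" using conj_back[OF hc, of m] e by simp
  define h' where "h' = emat w l (-m) * u' * emat w l m"
  have h'c: "h' \<in> carrier_mat (2*l) (2*l)" unfolding h'_def using u'c by (auto intro!: carrier_matI)
  have r1: "X * u * u' = X" if "dim_col X = 2*l" for X using that uc u'c by (simp add: massoc uu')
  have hh': "h * h' = 1\<^sub>m (2*l)"
    unfolding he h'_def using uc u'c by (simp add: massoc[symmetric] r1)
  obtain h'' where h''S: "h'' \<in> SO l \<rho>" and hh'': "h * h'' = 1\<^sub>m (2*l)" and h''h: "h'' * h = 1\<^sub>m (2*l)"
    using SO_inv[of h l \<rho>] h unfolding Kcong_def by auto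
  have h''c: "h'' \<in> carrier_mat (2*l) (2*l)" using h''S SO_carrier by auto
  have "h' = h'' * h * h'" using h''h h'c by simp
  also have "\<dots> = h''" using hh' h''c hc h'c by (simp add: massoc)
  finally have h'S: "h' \<in> SO l \<rho>" using h''S by simp
  have uth: "ut (2*l) h"
    unfolding ut_def
  proof (intro allI impI conjI)
    fix i j assume ij: "i < 2*l" "j < 2*l"
    have ent: "h $$ (i,j) = w powi (- ex l m i) * u $$ (i,j) * w powi (ex l m j)"
      unfolding he using conj_entry[OF uc ij] .
    show "j < i \<Longrightarrow> h $$ (i,j) = 0" using ent Um_ut[OF u] ij unfolding ut_def by simp
    show "i = j \<Longrightarrow> h $$ (i,j) = 1" using ent Um_ut[OF u] ij w0 unfolding ut_def
      by (simp add: power_int_minus)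
  qed
  have PA: "in_pow v m (h $$ (i,j))" if "i < j" "j < 2*l" for i j
  proof -
    have i2: "i < 2*l" using that by simp
    have "in_pow v m (h $$ (i,j) - 1\<^sub>m (2*l) $$ (i,j))" using h i2 that(2) unfolding Kcong_def by blast
    then show ?thesis using that by simp
  qed
  have Pmul: "in_pow v m (x * y)" if "in_pow v m x" "in_pow v m y" for x y
    using in_pow_mult[OF that] in_pow_mono[of m "m + m"] m by auto
  have X: "ut (2*l) h' \<and> (\<forall>i j. i < j \<longrightarrow> j < 2*l \<longrightarrow> in_pow v m (h' $$ (i,j)))"
    by (rule ut_inv[OF hc h'c uth hh', of "in_pow v m"]) (auto intro: PA in_pow_add in_pow_neg Pmul)
  have "h' \<in> Kcong v l \<rho> m"
    unfolding Kcong_def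
  proof (intro CollectI conjI allI impI h'S)
    fix i j assume ij: "i < 2*l" "j < 2*l"
    show "in_pow v m (h' $$ (i,j) - 1\<^sub>m (2*l) $$ (i,j))"
    proof (cases "i < j")
      case True then show ?thesis using X ij by auto
    next
      case False then show ?thesis using X ij unfolding ut_def
        by (cases "i = j") auto
    qed
  qed
  moreover have "u' = emat w l m * h' * emat w l (-m)"
    unfolding h'_def using u'c by (simp add: massoc)
  ultimately have "u' \<in> Hm v w l \<rho> m" unfolding Hm_iff by blast
  moreover have "u' \<in> Uunip l \<rho>" using u'S utu' by (simp add: Uunip_iff)
  ultimately show ?thesis unfolding Um_def using uu' u'u by auto
qed

lemma Um_bound:
  assumes u: "u \<in> Um v w l \<rho> m" and m: "0 \<le> m" and ij: "i < 2*l" "j < 2*l"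
  shows "in_pow v (- (4*m*int l)) (u $$ (i,j))"
proof -
  obtain h where h: "h \<in> Kcong v l \<rho> m" and e: "u = emat w l m * h * emat w l (-m)"
    using u unfolding Um_def by (auto simp: Hm_iff)
  have hc: "h \<in> carrier_mat (2*l) (2*l)" using h SO_carrier unfolding Kcong_def by auto
  have ent: "u $$ (i,j) = w powi ex l m i * h $$ (i,j) * w powi (- ex l m j)"
    unfolding e by (rule emat_conj[OF hc ij])
  have "in_pow v (ex l m i + 0 + - ex l m j) (u $$ (i,j))"
    unfolding ent by (intro in_pow_mult in_pow_powi[OF unif] Kcong_O[OF h m ij])
  moreover have "- (4*m*int l) \<le> ex l m i + 0 + - ex l m j"
    using ex_bound[OF ij(1) m] ex_bound[OF ij(2) m] by linarith
  ultimately show ?thesis using in_pow_mono by blast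
qed

end



context vfw
begin

definition GU :: "nat \<Rightarrow> 'f \<Rightarrow> int \<Rightarrow> 'f mat monoid" where
  "GU l \<rho> m = \<lparr>carrier = Um v w l \<rho> m, mult = (\<lambda>x y. x * y), one = 1\<^sub>m (2*l)\<rparr>"

definition Nk :: "nat \<Rightarrow> 'f \<Rightarrow> int \<Rightarrow> int \<Rightarrow> 'f mat set" where
  "Nk l \<rho> m k = Um v w l \<rho> m \<inter> cong_sub v (2*l) k"

lemma GU_simps[simp]: "carrier (GU l \<rho> m) = Um v w l \<rho> m" "mult (GU l \<rho> m) = (\<lambda>x y. x * y)"
  "one (GU l \<rho> m) = 1\<^sub>m (2*l)"
  by (simp_all add: GU_def)

lemma GU_group: assumes m: "0 \<le> m" shows "group (GU l \<rho> m)"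
proof (rule groupI)
  fix x y assume "x \<in> carrier (GU l \<rho> m)" "y \<in> carrier (GU l \<rho> m)"
  then show "x \<otimes>\<^bsub>GU l \<rho> m\<^esub> y \<in> carrier (GU l \<rho> m)" using Um_mult m by simp
next
  show "\<one>\<^bsub>GU l \<rho> m\<^esub> \<in> carrier (GU l \<rho> m)" using Um_one by simp
next
  fix x y z assume xyz: "x \<in> carrier (GU l \<rho> m)" "y \<in> carrier (GU l \<rho> m)" "z \<in> carrier (GU l \<rho> m)"
  have xc: "x \<in> carrier_mat (2*l) (2*l)" using xyz(1) Um_carrier by simp
  have yc: "y \<in> carrier_mat (2*l) (2*l)" using xyz(2) Um_carrier by simp
  have zc: "z \<in> carrier_mat (2*l) (2*l)" using xyz(3) Um_carrier by simp
  show "x \<otimes>\<^bsub>GU l \<rho> m\<^esub> y \<otimes>\<^bsub>GU l \<rho> m\<^esub> z = x \<otimes>\<^bsub>GU l \<rho> m\<^esub> (y \<otimes>\<^bsub>GU l \<rho> m\<^esub> z)"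
    using assoc_mult_mat[OF xc yc zc] by simp
next
  fix x assume "x \<in> carrier (GU l \<rho> m)"
  then have "x \<in> carrier_mat (2*l) (2*l)" using Um_carrier by simp
  then show "\<one>\<^bsub>GU l \<rho> m\<^esub> \<otimes>\<^bsub>GU l \<rho> m\<^esub> x = x" by simp
next
  fix x assume "x \<in> carrier (GU l \<rho> m)"
  then show "\<exists>y\<in>carrier (GU l \<rho> m). y \<otimes>\<^bsub>GU l \<rho> m\<^esub> x = \<one>\<^bsub>GU l \<rho> m\<^esub>"
    using Um_inv[of x l \<rho> m] m by auto
qed

lemma cong_O: assumes "y \<in> cong_sub v n k" "0 \<le> k" "i < n" "j < n"
  shows "in_pow v 0 (y $$ (i,j))"
proof -
  have "in_pow v k (y $$ (i,j) - 1\<^sub>m n $$ (i,j))" using assms unfolding cong_sub_def by auto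
  then have "in_pow v 0 (y $$ (i,j) - 1\<^sub>m n $$ (i,j))" using in_pow_mono assms(2) by blast
  from in_pow_add[OF this in_pow_delta[OF assms(3,4)]] show ?thesis by simp
qed

lemma Nk_subgroup: assumes m: "0 \<le> m" and k: "0 \<le> k"
  shows "subgroup (Nk l \<rho> m k) (GU l \<rho> m)"
proof -
  interpret G: group "GU l \<rho> m" by (rule GU_group[OF m])
  show ?thesis
  proof (rule G.subgroupI)
    show "Nk l \<rho> m k \<subseteq> carrier (GU l \<rho> m)" unfolding Nk_def by auto
    have "1\<^sub>m (2*l) \<in> cong_sub v (2*l) k" unfolding cong_sub_def by auto
    then show "Nk l \<rho> m k \<noteq> {}" unfolding Nk_def using Um_one by blast
  next
    fix a b assume a: "a \<in> Nk l \<rho> m k" and b: "b \<in> Nk l \<rho> m k"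
    have ac: "a \<in> carrier_mat (2*l) (2*l)" and bc: "b \<in> carrier_mat (2*l) (2*l)"
      using a b Um_carrier unfolding Nk_def by auto
    have "in_pow v k ((a * b) $$ (i,j) - 1\<^sub>m (2*l) $$ (i,j))" if ij: "i < 2*l" "j < 2*l" for i j
    proof -
      have "in_pow v (0 + k) ((a * b) $$ (i,j) - a $$ (i,j))"
        by (rule prod_close[OF ac bc cong_O[of a "2*l" k] _ ij]) (use a b k in \<open>auto simp: Nk_def cong_sub_def\<close>)
      moreover have "in_pow v k (a $$ (i,j) - 1\<^sub>m (2*l) $$ (i,j))" using a ij unfolding Nk_def cong_sub_def by auto
      ultimately show ?thesis using in_pow_add by fastforce
    qed
    then have "a * b \<in> cong_sub v (2*l) k" unfolding cong_sub_def using ac bc by auto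
    moreover have "a * b \<in> Um v w l \<rho> m" using Um_mult a b m unfolding Nk_def by auto
    ultimately show "a \<otimes>\<^bsub>GU l \<rho> m\<^esub> b \<in> Nk l \<rho> m k" unfolding Nk_def by simp
  next
    fix a assume a: "a \<in> Nk l \<rho> m k"
    have aU: "a \<in> Um v w l \<rho> m" using a unfolding Nk_def by auto
    have ac: "a \<in> carrier_mat (2*l) (2*l)" using aU Um_carrier by auto
    obtain a' where a'U: "a' \<in> Um v w l \<rho> m" and aa': "a * a' = 1\<^sub>m (2*l)" and a'a: "a' * a = 1\<^sub>m (2*l)"
      using Um_inv[OF aU m] by blast
    have a'c: "a' \<in> carrier_mat (2*l) (2*l)" using a'U Um_carrier by auto
    have PA: "in_pow v k (a $$ (i,j))" if "i < j" "j < 2*l" for i j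
    proof -
      have i2: "i < 2*l" using that by simp
      have "in_pow v k (a $$ (i,j) - 1\<^sub>m (2*l) $$ (i,j))" using a i2 that(2) unfolding Nk_def cong_sub_def by blast
      then show ?thesis using that by simp
    qed
    have Pmul: "in_pow v k (x * y)" if "in_pow v k x" "in_pow v k y" for x y
      using in_pow_mult[OF that] in_pow_mono[of k "k + k"] k by auto
    have X: "ut (2*l) a' \<and> (\<forall>i j. i < j \<longrightarrow> j < 2*l \<longrightarrow> in_pow v k (a' $$ (i,j)))"
      by (rule ut_inv[OF ac a'c Um_ut[OF aU] aa', of "in_pow v k"]) (auto intro: PA in_pow_add in_pow_neg Pmul)
    have "a' \<in> cong_sub v (2*l) k"
      unfolding cong_sub_def
    proof (intro CollectI conjI allI impI a'c)
      fix i j assume ij: "i < 2*l" "j < 2*l"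
      show "in_pow v k (a' $$ (i,j) - 1\<^sub>m (2*l) $$ (i,j))"
      proof (cases "i < j")
        case True then show ?thesis using X ij by auto
      next
        case False then show ?thesis using X ij unfolding ut_def
          by (cases "i = j") auto
      qed
    qed
    then have a'N: "a' \<in> Nk l \<rho> m k" using a'U unfolding Nk_def by simp
    have "inv\<^bsub>GU l \<rho> m\<^esub> a = a'"
      by (rule G.inv_equality) (use a'a aU a'U in auto)
    then show "inv\<^bsub>GU l \<rho> m\<^esub> a \<in> Nk l \<rho> m k" using a'N by simp
  qed
qed

lemma cs_eq: "0 \<le> m \<Longrightarrow> group.cs (GU l \<rho> m) N = (\<lambda>u. (\<lambda>y. u * y) ` N) ` Um v w l \<rho> m"
  by (simp add: group.cs_def[OF GU_group])

end


context vfw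
begin

lemma resid1: "\<exists>R. finite R \<and> (\<forall>x. in_pow v 0 x \<longrightarrow> (\<exists>r\<in>R. in_pow v 1 (x - r)))"
  using nl unfolding nonarch_local_field_def by blast

lemma powi_cancel: "w powi a * w powi (-a) = 1"
  using w0 by (simp add: power_int_minus)

lemma resid_nat: "\<exists>R. finite R \<and> (\<forall>x. in_pow v 0 x \<longrightarrow> (\<exists>r\<in>R. in_pow v (int j) (x - r)))"
proof (induction j)
  case 0
  show ?case by (rule exI[of _ "{0}"]) auto
next
  case (Suc j)
  obtain R where R: "finite R" "\<And>x. in_pow v 0 x \<Longrightarrow> \<exists>r\<in>R. in_pow v (int j) (x - r)" using Suc by blast
  obtain R1 where R1: "finite R1" "\<And>x. in_pow v 0 x \<Longrightarrow> \<exists>r\<in>R1. in_pow v 1 (x - r)" using resid1 by blast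
  define R' where "R' = (\<lambda>(r,s). r + w powi (int j) * s) ` (R \<times> R1)"
  have "finite R'" unfolding R'_def using R(1) R1(1) by simp
  moreover have "\<exists>r\<in>R'. in_pow v (int (Suc j)) (x - r)" if x: "in_pow v 0 x" for x
  proof -
    obtain r where r: "r \<in> R" "in_pow v (int j) (x - r)" using R(2)[OF x] by blast
    define y where "y = (x - r) * w powi (- int j)"
    have "in_pow v (int j + - int j) y" unfolding y_def by (rule in_pow_mult[OF r(2) in_pow_powi[OF unif]])
    then obtain s where s: "s \<in> R1" "in_pow v 1 (y - s)" using R1(2) by auto
    have "x - r = w powi (int j) * y" unfolding y_def using powi_cancel[of "int j"]
      by (simp add: algebra_simps)
    then have "x - (r + w powi (int j) * s) = w powi (int j) * (y - s)" by (simp add: algebra_simps)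
    moreover have "in_pow v (int j + 1) (w powi (int j) * (y - s))" by (rule in_pow_mult[OF in_pow_powi[OF unif] s(2)])
    ultimately have "in_pow v (int (Suc j)) (x - (r + w powi (int j) * s))" by (simp add: add.commute)
    moreover have "r + w powi (int j) * s \<in> R'" unfolding R'_def using r(1) s(1) by force
    ultimately show ?thesis by blast
  qed
  ultimately show ?case by blast
qed

lemma resid: "\<exists>R. finite R \<and> (\<forall>x. in_pow v B x \<longrightarrow> (\<exists>r\<in>R. in_pow v K (x - r)))"
proof (cases "K \<le> B")
  case True
  show ?thesis by (rule exI[of _ "{0}"]) (use True in_pow_mono in auto)
next
  case False
  obtain R where R: "finite R" "\<And>x. in_pow v 0 x \<Longrightarrow> \<exists>r\<in>R. in_pow v (int (nat (K - B))) (x - r)"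
    using resid_nat by blast
  define R' where "R' = (\<lambda>r. r * w powi B) ` R"
  have "finite R'" unfolding R'_def using R(1) by simp
  moreover have "\<exists>r\<in>R'. in_pow v K (x - r)" if x: "in_pow v B x" for x
  proof -
    have "in_pow v (B + - B) (x * w powi (-B))" by (rule in_pow_mult[OF x in_pow_powi[OF unif]])
    then obtain r where r: "r \<in> R" "in_pow v (K - B) (x * w powi (-B) - r)" using R(2) False by fastforce
    have "x - r * w powi B = (x * w powi (-B) - r) * w powi B"
      using powi_cancel[of B] by (simp add: algebra_simps)
    moreover have "in_pow v (K - B + B) ((x * w powi (-B) - r) * w powi B)"
      by (rule in_pow_mult[OF r(2) in_pow_powi[OF unif]])
    ultimately have "in_pow v K (x - r * w powi B)" by simp
    then show ?thesis unfolding R'_def using r(1) by blast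
  qed
  ultimately show ?thesis by blast
qed

lemma coset_eq_U:
  assumes m: "0 \<le> m" and k: "0 \<le> k" and u: "u \<in> Um v w l \<rho> m" and x: "x \<in> (\<lambda>y. u * y) ` Nk l \<rho> m k"
  shows "(\<lambda>y. x * y) ` Nk l \<rho> m k = (\<lambda>y. u * y) ` Nk l \<rho> m k"
proof -
  have u': "u \<in> carrier (GU l \<rho> m)" using u by simp
  have x': "x \<in> (\<lambda>y. u \<otimes>\<^bsub>GU l \<rho> m\<^esub> y) ` Nk l \<rho> m k" using x by simp
  show ?thesis using group.coset_eq[OF GU_group[OF m] Nk_subgroup[OF m k] u' x'] by simp
qed

lemma cs_finite:
  assumes m: "0 \<le> m" and k: "0 \<le> k"
  shows "finite (group.cs (GU l \<rho> m) (Nk l \<rho> m k))"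
proof -
  define n where "n = 2*l"
  define Bd where "Bd = 4*m*int l"
  obtain R where R: "finite R" "\<And>x. in_pow v (-Bd) x \<Longrightarrow> \<exists>r\<in>R. in_pow v (k + Bd) (x - r)"
    using resid[of "-Bd" "k + Bd"] by blast
  define I where "I = {..<n} \<times> {..<n}"
  define \<phi> where "\<phi> u = restrict (\<lambda>(i,j). SOME r. r \<in> R \<and> in_pow v (k + Bd) (u $$ (i,j) - r)) I" for u :: "'f mat"
  have \<phi>spec: "\<phi> u (i,j) \<in> R \<and> in_pow v (k + Bd) (u $$ (i,j) - \<phi> u (i,j))"
    if u: "u \<in> Um v w l \<rho> m" and ij: "i < n" "j < n" for u i j
  proof -
    have "in_pow v (-Bd) (u $$ (i,j))" using Um_bound[OF u m ij[unfolded n_def]] Bd_def by simp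
    then have "\<exists>r. r \<in> R \<and> in_pow v (k + Bd) (u $$ (i,j) - r)"
      using R(2) by blast
    then have "(SOME r. r \<in> R \<and> in_pow v (k + Bd) (u $$ (i,j) - r)) \<in> R \<and>
       in_pow v (k + Bd) (u $$ (i,j) - (SOME r. r \<in> R \<and> in_pow v (k + Bd) (u $$ (i,j) - r)))"
      by (rule someI_ex)
    then show ?thesis unfolding \<phi>_def I_def using ij by simp
  qed
  have \<phi>in: "\<phi> u \<in> PiE I (\<lambda>_. R)" if u: "u \<in> Um v w l \<rho> m" for u
  proof (rule PiE_I)
    fix p assume "p \<in> I"
    then obtain i j where p: "p = (i,j)" "i < n" "j < n" unfolding I_def by auto
    show "\<phi> u p \<in> R" using \<phi>spec[OF u p(2,3)] p(1) by simp
  next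
    fix p assume "p \<notin> I"
    then show "\<phi> u p = undefined" by (simp add: \<phi>_def)
  qed
  have finPi: "finite (PiE I (\<lambda>_. R))" using R(1) unfolding I_def by (intro finite_PiE) auto
  have key: "u' \<in> (\<lambda>y. u * y) ` Nk l \<rho> m k"
    if u: "u \<in> Um v w l \<rho> m" and u': "u' \<in> Um v w l \<rho> m" and eq: "\<phi> u = \<phi> u'" for u u'
  proof -
    obtain a where aU: "a \<in> Um v w l \<rho> m" and ua: "u * a = 1\<^sub>m (2*l)" and au: "a * u = 1\<^sub>m (2*l)"
      using Um_inv[OF u m] by blast
    have uc: "u \<in> carrier_mat n n" and u'c: "u' \<in> carrier_mat n n" and ac: "a \<in> carrier_mat n n"
      using Um_carrier u u' aU n_def by auto
    have "in_pow v k ((a * u') $$ (i,j) - 1\<^sub>m n $$ (i,j))" if ij: "i < n" "j < n" for i j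
    proof -
      have "(a * u') $$ (i,j) - 1\<^sub>m n $$ (i,j) = (a * u') $$ (i,j) - (a * u) $$ (i,j)"
        using au n_def by simp
      also have "\<dots> = (\<Sum>t<n. a $$ (i,t) * u' $$ (t,j)) - (\<Sum>t<n. a $$ (i,t) * u $$ (t,j))"
        using mult_entry[OF ac u'c ij] mult_entry[OF ac uc ij] by simp
      also have "\<dots> = (\<Sum>t<n. a $$ (i,t) * (u' $$ (t,j) - u $$ (t,j)))"
        by (simp add: sum_subtractf right_diff_distrib)
      finally have e: "(a * u') $$ (i,j) - 1\<^sub>m n $$ (i,j) = (\<Sum>t<n. a $$ (i,t) * (u' $$ (t,j) - u $$ (t,j)))" .
      have "in_pow v (-Bd + (k + Bd)) (a $$ (i,t) * (u' $$ (t,j) - u $$ (t,j)))" if t: "t < n" for t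
      proof (rule in_pow_mult)
        show "in_pow v (-Bd) (a $$ (i,t))" using Um_bound[OF aU m, of i t] ij t n_def Bd_def by simp
        have e2: "u' $$ (t,j) - u $$ (t,j) = (u' $$ (t,j) - \<phi> u' (t,j)) - (u $$ (t,j) - \<phi> u (t,j))"
          using eq by simp
        have "in_pow v (k + Bd) ((u' $$ (t,j) - \<phi> u' (t,j)) - (u $$ (t,j) - \<phi> u (t,j)))"
          using \<phi>spec[OF u t ij(2)] \<phi>spec[OF u' t ij(2)] in_pow_diff by blast
        then show "in_pow v (k + Bd) (u' $$ (t,j) - u $$ (t,j))" unfolding e2 .
      qed
      then show ?thesis unfolding e by (auto intro!: in_pow_sum)
    qed
    then have "a * u' \<in> cong_sub v (2*l) k" unfolding cong_sub_def using ac u'c n_def by auto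
    moreover have "a * u' \<in> Um v w l \<rho> m" using Um_mult[OF aU u' m] .
    ultimately have N: "a * u' \<in> Nk l \<rho> m k" unfolding Nk_def by simp
    have "u * (a * u') = u'" using assoc_mult_mat[OF uc ac u'c] ua u'c n_def by simp
    then show ?thesis using N by (metis image_eqI)
  qed
  define rep where "rep r = (SOME u. u \<in> Um v w l \<rho> m \<and> \<phi> u = r)" for r
  have "(\<lambda>u. (\<lambda>y. u * y) ` Nk l \<rho> m k) ` Um v w l \<rho> m \<subseteq> (\<lambda>r. (\<lambda>y. rep r * y) ` Nk l \<rho> m k) ` (\<phi> ` Um v w l \<rho> m)"
  proof
    fix C assume "C \<in> (\<lambda>u. (\<lambda>y. u * y) ` Nk l \<rho> m k) ` Um v w l \<rho> m"
    then obtain u where u: "u \<in> Um v w l \<rho> m" and C: "C = (\<lambda>y. u * y) ` Nk l \<rho> m k" by auto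
    have "\<exists>u'. u' \<in> Um v w l \<rho> m \<and> \<phi> u' = \<phi> u" using u by blast
    then have "rep (\<phi> u) \<in> Um v w l \<rho> m \<and> \<phi> (rep (\<phi> u)) = \<phi> u" unfolding rep_def by (rule someI_ex)
    then have r: "rep (\<phi> u) \<in> Um v w l \<rho> m" "\<phi> (rep (\<phi> u)) = \<phi> u" by auto
    have "u \<in> (\<lambda>y. rep (\<phi> u) * y) ` Nk l \<rho> m k" using key[OF r(1) u r(2)] .
    then have "C = (\<lambda>y. rep (\<phi> u) * y) ` Nk l \<rho> m k" unfolding C using coset_eq_U[OF m k r(1)] by blast
    then show "C \<in> (\<lambda>r. (\<lambda>y. rep r * y) ` Nk l \<rho> m k) ` (\<phi> ` Um v w l \<rho> m)" using u by blast
  qed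
  moreover have "finite (\<phi> ` Um v w l \<rho> m)" using finPi \<phi>in by (meson finite_subset image_subsetI)
  ultimately show ?thesis unfolding cs_eq[OF m] by (meson finite_imageI finite_subset)
qed

end


context vfw
begin

lemma Nk_mono: "k \<le> K \<Longrightarrow> Nk l \<rho> m K \<subseteq> Nk l \<rho> m k"
  unfolding Nk_def cong_sub_def using in_pow_mono by blast

definition avgk :: "nat \<Rightarrow> 'f \<Rightarrow> int \<Rightarrow> ('f mat \<Rightarrow> complex) \<Rightarrow> int \<Rightarrow> complex" where
  "avgk l \<rho> m f k = (\<Sum>C\<in>group.cs (GU l \<rho> m) (Nk l \<rho> m k). f (SOME x. x \<in> C)) / of_nat (card (group.cs (GU l \<rho> m) (Nk l \<rho> m k)))"

lemma avgk_refine: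
  assumes m: "0 \<le> m" and k: "0 \<le> k" and kK: "k \<le> K"
    and inv: "\<forall>x\<in>Um v w l \<rho> m. \<forall>y\<in>Nk l \<rho> m k. f (x * y) = f x"
  shows "avgk l \<rho> m f K = avgk l \<rho> m f k"
proof -
  have K: "0 \<le> K" using k kK by simp
  have inv': "\<forall>x\<in>carrier (GU l \<rho> m). \<forall>y\<in>Nk l \<rho> m k. f (x \<otimes>\<^bsub>GU l \<rho> m\<^esub> y) = f x" using inv by simp
  show ?thesis unfolding avgk_def
    by (rule group.avg_refine[OF GU_group[OF m] Nk_subgroup[OF m k] Nk_subgroup[OF m K] Nk_mono[OF kK]
          cs_finite[OF m k] cs_finite[OF m K] inv'])
qed

lemma haar_avg_eval:
  assumes m: "0 \<le> m" and k0: "1 \<le> k0"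
    and inv: "\<forall>x\<in>Um v w l \<rho> m. \<forall>y\<in>Nk l \<rho> m k0. f (x * y) = f x"
  shows "haar_avg v (2*l) (Um v w l \<rho> m) f = avgk l \<rho> m f k0"
proof -
  have P: "(let N = Um v w l \<rho> m \<inter> cong_sub v (2*l) k; Cs = (\<lambda>u. (\<lambda>y. u * y) ` N) ` Um v w l \<rho> m in
       finite Cs \<and> (\<forall>x\<in>Um v w l \<rho> m. \<forall>y\<in>N. f (x * y) = f x) \<and>
       c = (\<Sum>C\<in>Cs. f (SOME x. x \<in> C)) / of_nat (card Cs))
    \<longleftrightarrow> (\<forall>x\<in>Um v w l \<rho> m. \<forall>y\<in>Nk l \<rho> m k. f (x * y) = f x) \<and> c = avgk l \<rho> m f k"
    if k: "1 \<le> k" for k c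
    using cs_finite[OF m, of k l \<rho>] k unfolding Let_def avgk_def cs_eq[OF m] Nk_def[symmetric] by auto
  show ?thesis unfolding haar_avg_def
  proof (rule the_equality)
    show "\<exists>k\<ge>1. let N = Um v w l \<rho> m \<inter> cong_sub v (2*l) k; Cs = (\<lambda>u. (\<lambda>y. u * y) ` N) ` Um v w l \<rho> m in
       finite Cs \<and> (\<forall>x\<in>Um v w l \<rho> m. \<forall>y\<in>N. f (x * y) = f x) \<and>
       avgk l \<rho> m f k0 = (\<Sum>C\<in>Cs. f (SOME x. x \<in> C)) / of_nat (card Cs)"
      using P[OF k0] inv k0 by blast
  next
    fix c assume "\<exists>k\<ge>1. let N = Um v w l \<rho> m \<inter> cong_sub v (2*l) k; Cs = (\<lambda>u. (\<lambda>y. u * y) ` N) ` Um v w l \<rho> m in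
       finite Cs \<and> (\<forall>x\<in>Um v w l \<rho> m. \<forall>y\<in>N. f (x * y) = f x) \<and>
       c = (\<Sum>C\<in>Cs. f (SOME x. x \<in> C)) / of_nat (card Cs)"
    then obtain k where k: "1 \<le> k" and invk: "\<forall>x\<in>Um v w l \<rho> m. \<forall>y\<in>Nk l \<rho> m k. f (x * y) = f x"
      and c: "c = avgk l \<rho> m f k" using P by blast
    have "avgk l \<rho> m f (max k k0) = avgk l \<rho> m f k" by (rule avgk_refine[OF m _ _ invk]) (use k in auto)
    moreover have "avgk l \<rho> m f (max k k0) = avgk l \<rho> m f k0" by (rule avgk_refine[OF m _ _ inv]) (use k0 in auto)
    ultimately show "c = avgk l \<rho> m f k0" using c by simp
  qed
qed

end


context vfw
begin

lemma in_pow_half: "in_pow v (- v 2) (inverse (2::'f))"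
  unfolding in_pow_def using vinv[of 2] by simp

lemma psim_inv:
  assumes m: "0 \<le> m" and l2: "2 \<le> l" and u: "u \<in> Um v w l \<rho> m" and y: "y \<in> Nk l \<rho> m k"
    and kb: "2 * (4*m*int l) + 2*m + \<bar>v 2\<bar> \<le> k"
    and psi: "unramified_additive_char v \<psi>"
  shows "psim \<psi> w l m (u * y) = psim \<psi> w l m u"
proof -
  define n where "n = 2*l"
  define Bd where "Bd = 4*m*int l"
  have uc: "u \<in> carrier_mat (2*l) (2*l)" using Um_carrier[OF u] .
  have yc: "y \<in> carrier_mat (2*l) (2*l)" using y unfolding Nk_def cong_sub_def by auto
  have uyc: "u * y \<in> carrier_mat (2*l) (2*l)" using uc yc by simp
  have k0: "0 \<le> k" using kb m mult_nonneg_nonneg[OF m, of "int l"] by linarith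
  define M1 where "M1 = emat w l (-m) * (u * y) * emat w l m"
  define M0 where "M0 = emat w l (-m) * u * emat w l m"
  define D where "D i j = M1 $$ (i,j) - M0 $$ (i,j)" for i j
  have Db: "in_pow v (k - 2*Bd) (D i j)" if ij: "i < 2*l" "j < 2*l" for i j
  proof -
    have "in_pow v (-Bd + k) ((u * y) $$ (i,j) - u $$ (i,j))"
      by (rule prod_close[OF uc yc _ _ ij]) (use Um_bound[OF u m] y in \<open>auto simp: Bd_def Nk_def cong_sub_def\<close>)
    then have "in_pow v (- ex l m i + (-Bd + k) + ex l m j) (w powi (- ex l m i) * ((u * y) $$ (i,j) - u $$ (i,j)) * w powi (ex l m j))"
      by (intro in_pow_mult in_pow_powi[OF unif])
    moreover have "D i j = w powi (- ex l m i) * ((u * y) $$ (i,j) - u $$ (i,j)) * w powi (ex l m j)"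
      unfolding D_def M1_def M0_def conj_entry[OF uyc ij] conj_entry[OF uc ij] by (simp add: algebra_simps)
    moreover have "k - 2*Bd \<le> - ex l m i + (-Bd + k) + ex l m j"
      using ex_bound[OF ij(1) m] ex_bound[OF ij(2) m] Bd_def by linarith
    ultimately show ?thesis using in_pow_mono by metis
  qed
  define X where "X = w powi (-2*m) * ((\<Sum>i<l-2. D i (i+1)) + D (l-2) l / 2)"
  have "in_pow v (k - 2*Bd - \<bar>v 2\<bar>) ((\<Sum>i<l-2. D i (i+1)) + D (l-2) l / 2)"
  proof (rule in_pow_add)
    have "in_pow v (k - 2*Bd) (\<Sum>i<l-2. D i (i+1))" by (rule in_pow_sum) (use Db l2 in auto)
    moreover have "k - 2*Bd - \<bar>v 2\<bar> \<le> k - 2*Bd" by simp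
    ultimately show "in_pow v (k - 2*Bd - \<bar>v 2\<bar>) (\<Sum>i<l-2. D i (i+1))" using in_pow_mono by metis
    have "in_pow v (k - 2*Bd + - v 2) (D (l-2) l * inverse 2)"
      by (rule in_pow_mult[OF Db in_pow_half]) (use l2 in auto)
    moreover have le: "k - 2*Bd - \<bar>v 2\<bar> \<le> k - 2*Bd + - v 2" using abs_ge_minus_self[of "v (2::'f)"] by linarith
    moreover have eq: "D (l-2) l / 2 = D (l-2) l * inverse 2" by (rule divide_inverse)
    ultimately show "in_pow v (k - 2*Bd - \<bar>v 2\<bar>) (D (l-2) l / 2)"
      using in_pow_mono by metis
  qed
  then have "in_pow v (-2*m + (k - 2*Bd - \<bar>v 2\<bar>)) X"
    unfolding X_def by (intro in_pow_mult in_pow_powi[OF unif])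
  then have X0: "in_pow v 0 X" using kb Bd_def in_pow_mono[of 0 "-2*m + (k - 2*Bd - \<bar>v 2\<bar>)"] by simp
  have psiX: "\<psi> X = 1" using psi X0 unfolding unramified_additive_char_def by blast
  have psiadd: "\<psi> (a + b) = \<psi> a * \<psi> b" for a b using psi unfolding unramified_additive_char_def by blast
  have L: "(\<Sum>i<l-2. M1 $$ (i,i+1)) + M1 $$ (l-2,l) / 2 =
      ((\<Sum>i<l-2. M0 $$ (i,i+1)) + M0 $$ (l-2,l) / 2) + ((\<Sum>i<l-2. D i (i+1)) + D (l-2) l / 2)"
    unfolding D_def by (simp add: sum_subtractf diff_divide_distrib algebra_simps)
  have "psim \<psi> w l m (u * y) = \<psi> (w powi (-2*m) * ((\<Sum>i<l-2. M1 $$ (i,i+1)) + M1 $$ (l-2,l) / 2))"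
    unfolding psim_def tau_def M1_def ..
  also have "\<dots> = \<psi> (w powi (-2*m) * ((\<Sum>i<l-2. M0 $$ (i,i+1)) + M0 $$ (l-2,l) / 2) + X)"
    unfolding L X_def by (simp add: algebra_simps)
  also have "\<dots> = \<psi> (w powi (-2*m) * ((\<Sum>i<l-2. M0 $$ (i,i+1)) + M0 $$ (l-2,l) / 2))"
    using psiadd psiX by simp
  also have "\<dots> = psim \<psi> w l m u" unfolding psim_def tau_def M0_def ..
  finally show ?thesis .
qed

end


theorem lemma4p3:
  fixes v :: "'f::field_char_0 \<Rightarrow> int" and w :: 'f and \<psi> :: "'f \<Rightarrow> complex"
    and \<rho> :: 'f and l :: nat
    and sm :: "complex \<Rightarrow> 'v::ab_group_add \<Rightarrow> 'v" and \<pi> :: "'f mat \<Rightarrow> 'v \<Rightarrow> 'v"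
    and \<Gamma> :: "'v \<Rightarrow> complex" and W :: "'f mat \<Rightarrow> complex" and m :: int
  assumes "nonarch_local_field v"
    and "uniformizer v w"
    and "unramified_additive_char v \<psi>"
    and "\<not> (\<exists>x. x * x = \<rho>)"
    and "l \<ge> 2"
    and "smooth_rep v l \<rho> sm \<pi>"
    and "irreducible_rep l \<rho> sm \<pi>"
    and "whittaker_functional \<psi> l \<rho> sm \<pi> \<Gamma>"
    and "\<Gamma> \<noteq> (\<lambda>_. 0)"
    and "W \<in> whittaker_model l \<rho> \<pi> \<Gamma>"
    and "W (1\<^sub>m (2*l)) = 1"
    and "m \<ge> 1"
  shows "Wm v w \<psi> l \<rho> m W \<in> whittaker_model l \<rho> \<pi> \<Gamma>"
proof -
  note nl = assms(1) and unif = assms(2) and psi = assms(3) and l2 = assms(5)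
    and sr = assms(6) and wf = assms(8) and WM = assms(10) and m1 = assms(12)
  interpret vfw v w by unfold_locales (use nl unif in auto)
  have m: "0 \<le> m" using m1 by simp
  obtain x where Wx: "\<And>g. g \<in> SO l \<rho> \<Longrightarrow> W g = \<Gamma> (\<pi> g x)"
    using WM unfolding whittaker_model_def by blast
  obtain m0 where m0: "m0 \<ge> 1" "\<And>k. k \<in> Kcong v l \<rho> m0 \<Longrightarrow> \<pi> k x = x"
    using sr unfolding smooth_rep_def by blast
  have lin: "\<And>g. g \<in> SO l \<rho> \<Longrightarrow> Vector_Spaces.linear sm sm (\<pi> g)"
    and comp: "\<And>g h. g \<in> SO l \<rho> \<Longrightarrow> h \<in> SO l \<rho> \<Longrightarrow> \<pi> (g * h) = \<pi> g \<circ> \<pi> h"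
    using sr unfolding smooth_rep_def by auto
  have linG: "Vector_Spaces.linear sm (*) \<Gamma>" using wf unfolding whittaker_functional_def by auto
  define k0 where "k0 = max m0 (2 * (4*m*int l) + 2*m + \<bar>v 2\<bar>)"
  have k01: "1 \<le> k0" using m0 unfolding k0_def by simp
  have kb: "2 * (4*m*int l) + 2*m + \<bar>v 2\<bar> \<le> k0" unfolding k0_def by simp
  have NK: "y \<in> Kcong v l \<rho> m0" if y: "y \<in> Nk l \<rho> m k0" for y
  proof -
    have "y \<in> SO l \<rho>" using y Um_SO unfolding Nk_def by auto
    moreover have "in_pow v m0 (y $$ (i,j) - 1\<^sub>m (2*l) $$ (i,j))" if "i < 2*l" "j < 2*l" for i j
      using y that in_pow_mono[of m0 k0] unfolding Nk_def cong_sub_def k0_def by auto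
    ultimately show ?thesis unfolding Kcong_def by auto
  qed
  define f where "f g u = inverse (psim \<psi> w l m u) * W (g * u)" for g u
  have inv: "\<forall>u\<in>Um v w l \<rho> m. \<forall>y\<in>Nk l \<rho> m k0. f g (u * y) = f g u" if g: "g \<in> SO l \<rho>" for g
  proof (intro ballI)
    fix u y assume u: "u \<in> Um v w l \<rho> m" and y: "y \<in> Nk l \<rho> m k0"
    have uS: "u \<in> SO l \<rho>" using Um_SO[OF u] .
    have yS: "y \<in> SO l \<rho>" using y Um_SO unfolding Nk_def by auto
    have gu: "g * u \<in> SO l \<rho>" using SO_mult[OF g uS] .
    have "g * (u * y) = (g * u) * y"
      using assoc_mult_mat[OF SO_carrier[OF g] SO_carrier[OF uS] SO_carrier[OF yS]] by simp
    then have "W (g * (u * y)) = \<Gamma> (\<pi> (g * u) (\<pi> y x))"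
      using Wx[OF SO_mult[OF gu yS]] comp[OF gu yS] by simp
    also have "\<dots> = W (g * u)" using m0(2)[OF NK[OF y]] Wx[OF gu] by simp
    finally show "f g (u * y) = f g u"
      unfolding f_def using psim_inv[OF m l2 u y kb psi] by simp
  qed
  define Cs where "Cs = group.cs (GU l \<rho> m) (Nk l \<rho> m k0)"
  define rep where "rep C = (SOME x. x \<in> C)" for C :: "'f mat set"
  define c where "c = card Cs"
  have repU: "rep C \<in> Um v w l \<rho> m" if C: "C \<in> Cs" for C
  proof -
    have G: "group (GU l \<rho> m)" by (rule GU_group[OF m])
    have N: "subgroup (Nk l \<rho> m k0) (GU l \<rho> m)" using Nk_subgroup[OF m] k01 by simp
    have "rep C \<in> C" using group.some_in[OF G N] C unfolding Cs_def rep_def by blast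
    moreover obtain u where "u \<in> carrier (GU l \<rho> m)" "C = (\<lambda>y. u \<otimes>\<^bsub>GU l \<rho> m\<^esub> y) ` Nk l \<rho> m k0"
      using C unfolding Cs_def group.cs_def[OF G] by auto
    ultimately show ?thesis using group.coset_sub[OF G N] by fastforce
  qed
  define x' where "x' = (\<Sum>C\<in>Cs. sm (inverse (psim \<psi> w l m (rep C)) / of_nat c) (\<pi> (rep C) x))"
  have "Wm v w \<psi> l \<rho> m W g = \<Gamma> (\<pi> g x')" if g: "g \<in> SO l \<rho>" for g
  proof -
    have mh: "module_hom sm sm (\<pi> g)" using lin[OF g] by (simp add: module_hom_iff_linear)
    have mhG: "module_hom sm (*) \<Gamma>" using linG by (simp add: module_hom_iff_linear)
    have "Wm v w \<psi> l \<rho> m W g = haar_avg v (2*l) (Um v w l \<rho> m) (f g)"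
      unfolding Wm_def f_def ..
    also have "\<dots> = avgk l \<rho> m (f g) k0" by (rule haar_avg_eval[OF m k01 inv[OF g]])
    also have "\<dots> = (\<Sum>C\<in>Cs. f g (rep C)) / of_nat c" unfolding avgk_def Cs_def rep_def c_def ..
    also have "\<dots> = (\<Sum>C\<in>Cs. inverse (psim \<psi> w l m (rep C)) / of_nat c * \<Gamma> (\<pi> g (\<pi> (rep C) x)))"
      unfolding sum_divide_distrib
    proof (rule sum.cong[OF refl])
      fix C assume C: "C \<in> Cs"
      have rS: "rep C \<in> SO l \<rho>" using Um_SO[OF repU[OF C]] .
      have "\<pi> g (\<pi> (rep C) x) = \<pi> (g * rep C) x" using comp[OF g rS] by simp
      then show "f g (rep C) / of_nat c = inverse (psim \<psi> w l m (rep C)) / of_nat c * \<Gamma> (\<pi> g (\<pi> (rep C) x))"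
        unfolding f_def using Wx[OF SO_mult[OF g rS]] by simp
    qed
    also have "\<dots> = \<Gamma> (\<pi> g x')"
      unfolding x'_def module_hom.sum[OF mh] module_hom.sum[OF mhG] module_hom.scale[OF mh] module_hom.scale[OF mhG] ..
    finally show ?thesis .
  qed
  then show ?thesis unfolding whittaker_model_def by blast
qed


end
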